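(* Assume the standing assumptions, let $h=h^\star$, let $D_0\in\mathbb N$ be fixed, and let $\underline\sigma\sim(\underline D_1,\underline P_1,\ldots,\underline D_S,\underline P_S)$ be a state on $\Lambda_N$ as follows: each $\underline P_i$ consists of $M_i$ (even) blocks of length $h^\star$, all $\underline P_i$ begin with the same sign, the $\underline D_i$ are arbitrary arrays of total lengths $D_i$, $D=\sum_iD_i\le D_0$, $M=\sum_iM_i$, $N=Mh^\star+D$. For $i=1,\ldots,S$ let $\underline\delta_i\sim(\underline D_i,\underline Q_i)$ be the state consisting of the single defect $\underline D_i$ followed by a block of $h^\star$-periodic blocks, with total number of sites $$N_i=Mh^\star+2h^\star\sum_{j=i+1}^S\lfloor D_j/2h^\star\rfloor+D_i+2h^\star\Big\lfloor\sum_{j=1}^{i-1}D_j/2h^\star\Big\rfloor .$$ Then, with an implied constant depending only on $D_0$ (and $p,J,h^\star$) and not on $N$, $$F_N(\underline\sigma)=\sum_{i=1}^SF_{N_i}(\underline\delta_i)+O\big((\min_iM_i)^{1-p}\big).$$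
   Context: Fix $p>1$ and $J>0$. For $N\in\mathbb N$ let $\Lambda_N=\mathbb Z/N\mathbb Z$; a state is $\underline\sigma\in\{\pm1\}^{\Lambda_N}$, identified with its $N$-periodic extension to $\mathbb Z$. The energy is $$E_N(\underline\sigma)=-J\sum_{i\in\Lambda_N}\sigma_i\sigma_{i+1}+\sum_{i=1}^N\sum_{j\in\mathbb Z,\,j\neq i}\frac{\sigma_i\sigma_j}{|i-j|^p}.$$ Block arrays: up to a translation (which does not change the energy), every state is described by the cyclic array $(h_1,\ldots,h_M)$ of lengths of consecutive blocks of equal spins, consecutive blocks having opposite signs, $h_1+\cdots+h_M=N$; a concatenation of arrays denotes the state with that cyclic sequence of alternating-sign blocks. For $h\in\mathbb N$, $e(h)=E_{2h}(h,h)/(2h)$. Standing assumptions: either $1<p\le2$, or $p>2$ and $J<J_p:=\frac1{\Gamma(p)}\int_0^\infty\frac{\alpha^{p-1}e^{-\alpha}}{(1-e^{-\alpha})^2}d\alpha$; and $e$ has a unique minimizer $h^\star$ on $\mathbb N$. The renormalized energy is $F_N(\underline\sigma)=E_N(\underline\sigma)-Ne(h^\star)$. *)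

theory Defs
  imports "HOL-Analysis.Analysis"
begin

text \<open>Block arrays: a state on Lambda_N is encoded by a cyclic array hs of positive block
lengths (N = sum_list hs); block number k (counted from 0) carries spin (-1)^k, and the
first block starts at site 1.  The spin configuration is extended N-periodically to the integers.\<close>

definition block_index :: "nat list \<Rightarrow> nat \<Rightarrow> nat" where
  "block_index hs r = (LEAST k. r < sum_list (take (Suc k) hs))"

definition spin_of :: "nat list \<Rightarrow> int \<Rightarrow> real" where
  "spin_of hs x = (-1) ^ block_index hs (nat ((x - 1) mod int (sum_list hs)))"

definition energy :: "real \<Rightarrow> real \<Rightarrow> nat \<Rightarrow> (int \<Rightarrow> real) \<Rightarrow> real" where
  "energy p J N \<sigma> =
     - J * (\<Sum>i=1..int N. \<sigma> i * \<sigma> (i + 1))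
     + (\<Sum>i=1..int N. \<Sum>\<^sub>\<infinity> j\<in>-{i}. \<sigma> i * \<sigma> j / \<bar>real_of_int (i - j)\<bar> powr p)"

definition E_arr :: "real \<Rightarrow> real \<Rightarrow> nat list \<Rightarrow> real" where
  "E_arr p J hs = energy p J (sum_list hs) (spin_of hs)"

definition e_per :: "real \<Rightarrow> real \<Rightarrow> nat \<Rightarrow> real" where
  "e_per p J h = E_arr p J [h, h] / (2 * real h)"

definition J_crit :: "real \<Rightarrow> real" where
  "J_crit p = (1 / Gamma p) *
     integral {0<..} (\<lambda>\<alpha>::real. \<alpha> powr (p - 1) * exp (- \<alpha>) / (1 - exp (- \<alpha>))^2)"

definition standing :: "real \<Rightarrow> real \<Rightarrow> nat \<Rightarrow> bool" where
  "standing p J hstar \<longleftrightarrow> p > 1 \<and> J > 0 \<and> (p \<le> 2 \<or> (p > 2 \<and> J < J_crit p)) \<and>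
     hstar > 0 \<and> (\<forall>h. h > 0 \<and> h \<noteq> hstar \<longrightarrow> e_per p J hstar < e_per p J h)"

definition F_arr :: "real \<Rightarrow> real \<Rightarrow> nat \<Rightarrow> nat list \<Rightarrow> real" where
  "F_arr p J hstar hs = E_arr p J hs - real (sum_list hs) * e_per p J hstar"

end

theory Submission
  imports Defs
begin

lemma summable_inv_powr:
  fixes p :: real assumes "p > 1"
  shows "summable (\<lambda>n::nat. 1 / real (n+1) powr p)"
proof -
  have "summable (\<lambda>n::nat. real n powr (-p))" using assms by (subst summable_real_powr_iff) auto
  hence "summable (\<lambda>n::nat. real (Suc n) powr (-p))" by (subst summable_Suc_iff)
  thus ?thesis by (simp add: powr_minus divide_inverse)
qed

lemma summable_bdd_powr:
  fixes p :: real and f :: "nat \<Rightarrow> real" assumes "p > 1" "\<And>n. \<bar>f n\<bar> \<le> B"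
  shows "summable (\<lambda>n. f n / real (n+1) powr p)"
proof (rule summable_comparison_test'[where g="\<lambda>n. B * (1 / real (n+1) powr p)"])
  show "summable (\<lambda>n. B * (1 / real (n+1) powr p))"
    using summable_inv_powr[OF assms(1)] by (rule summable_mult)
  fix n
  have "\<bar>f n\<bar> / real (n+1) powr p \<le> B / real (n+1) powr p"
    using assms(2) by (intro divide_right_mono) auto
  thus "norm (f n / real (n+1) powr p) \<le> B * (1 / real (n+1) powr p)" by (simp add: abs_divide)
qed

definition gx :: "real \<Rightarrow> real \<Rightarrow> (int \<Rightarrow> real) \<Rightarrow> int \<Rightarrow> real" where
 "gx p J s x = - J * s x * s (x+1) + 2 * (\<Sum>n. s x * s (x + int n + 1) / real (n+1) powr p)"

lemma periodic_sum_shift_nat: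
  fixes f :: "int \<Rightarrow> real" and N :: nat
  assumes per: "\<And>x. f (x + int N) = f x"
  shows "(\<Sum>i\<in>{1..int N}. f (i + int k)) = (\<Sum>i\<in>{1..int N}. f i)"
proof (induction k)
  case 0 then show ?case by simp
next
  case (Suc k)
  have "(\<Sum>i\<in>{1..int N}. f (i + int (Suc k))) = (\<Sum>i\<in>{1..int N}. f (i + 1 + int k))"
    by (simp add: algebra_simps)
  also have "\<dots> = (\<Sum>i\<in>{2..int N + 1}. f (i + int k))"
    by (rule sum.reindex_bij_witness[where i="\<lambda>i. i - 1" and j="\<lambda>i. i + 1"]) auto
  also have "\<dots> = (\<Sum>i\<in>{1..int N}. f (i + int k))"
  proof (cases "N = 0")
    case True then show ?thesis by simp
  next
    case False
    have "N \<ge> 1" using False by simp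
    hence A: "{2..int N + 1} = insert (int N + 1) ({2..int N})" by auto
    have B: "{1..int N} = insert 1 ({2..int N})" using \<open>N \<ge> 1\<close> by auto
    have "f (int N + 1 + int k) = f (1 + int k)" using per[of "1 + int k"] by (simp add: algebra_simps)
    thus ?thesis unfolding A B by (simp)
  qed
  finally show ?case using Suc by simp
qed

lemma periodic_sum_shift:
  fixes f :: "int \<Rightarrow> real" and N :: nat
  assumes per: "\<And>x. f (x + int N) = f x"
  shows "(\<Sum>i\<in>{1..int N}. f (i + k)) = (\<Sum>i\<in>{1..int N}. f i)"
proof (cases "k \<ge> 0")
  case True
  then obtain k' where "k = int k'" by (metis nonneg_eq_int)
  then show ?thesis using periodic_sum_shift_nat[of f N k', OF per] by simp
next
  case False
  then obtain k' where k': "k = - int k'" by (metis nonpos_int_cases not_le less_imp_le)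
  let ?g = "\<lambda>i. f (i - int k')"
  have per': "\<And>x. ?g (x + int N) = ?g x" using per[of "x - int k'" for x] by (simp add: algebra_simps)
  have "(\<Sum>i\<in>{1..int N}. ?g (i + int k')) = (\<Sum>i\<in>{1..int N}. ?g i)"
    using per' by (rule periodic_sum_shift_nat)
  thus ?thesis using k' by simp
qed


lemma abs_summ_aux:
  fixes p :: real assumes "p > 1" "\<And>y. \<bar>s y\<bar> \<le> 1"
  shows "summable (\<lambda>n. norm (s x * s (g n) / real (n+1) powr p))"
proof -
  have "summable (\<lambda>n. \<bar>s x * s (g n)\<bar> / real (n+1) powr p)"
  proof (rule summable_bdd_powr[where B=1])
    show "p > 1" using assms(1) .
    fix n
    show "\<bar>\<bar>s x * s (g n)\<bar>\<bar> \<le> 1"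
      using assms(2)[of x] assms(2)[of "g n"] by (simp add: abs_mult mult_le_one)
  qed
  thus ?thesis by (simp add: abs_divide)
qed

lemma summ_aux:
  fixes p :: real assumes "p > 1" "\<And>y. \<bar>s y\<bar> \<le> 1"
  shows "summable (\<lambda>n. s x * s (g n) / real (n+1) powr p)"
  by (rule summable_norm_cancel[OF abs_summ_aux[where s=s, OF assms]])

lemma infsum_site:
  fixes p :: real assumes p: "p > 1" and bd: "\<And>y. \<bar>s y\<bar> \<le> 1"
  shows "(\<Sum>\<^sub>\<infinity> j\<in>-{i}. s i * s j / \<bar>real_of_int (i - j)\<bar> powr p)
       = (\<Sum>n. s i * s (i + int n + 1) / real (n+1) powr p) + (\<Sum>n. s i * s (i - int n - 1) / real (n+1) powr p)"
proof -
  define f where "f = (\<lambda>j. s i * s j / \<bar>real_of_int (i - j)\<bar> powr p)" 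
  define a where "a n = s i * s (i + int n + 1) / real (n+1) powr p" for n :: nat
  define b where "b n = s i * s (i - int n - 1) / real (n+1) powr p" for n :: nat
  have ha: "(a has_sum (\<Sum>n. a n)) UNIV"
    unfolding a_def using abs_summ_aux[where s=s, OF p bd] summ_aux[where s=s, OF p bd]
    by (intro norm_summable_imp_has_sum summable_sums) auto
  have hb: "(b has_sum (\<Sum>n. b n)) UNIV"
    unfolding b_def using abs_summ_aux[where s=s, OF p bd] summ_aux[where s=s, OF p bd]
    by (intro norm_summable_imp_has_sum summable_sums) auto
  have ia: "inj (\<lambda>n::nat. i + int n + 1)" by (auto simp: inj_def)
  have ib: "inj (\<lambda>n::nat. i - int n - 1)" by (auto simp: inj_def)
  have fa: "f \<circ> (\<lambda>n::nat. i + int n + 1) = a"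
  proof
    fix n :: nat
    have "\<bar>real_of_int (i - (i + int n + 1))\<bar> = real (n+1)" by simp
    thus "(f \<circ> (\<lambda>n::nat. i + int n + 1)) n = a n" by (simp add: f_def a_def add.commute)
  qed
  have fb: "f \<circ> (\<lambda>n::nat. i - int n - 1) = b"
  proof
    fix n :: nat
    have "\<bar>real_of_int (i - (i - int n - 1))\<bar> = real (n+1)" by simp
    thus "(f \<circ> (\<lambda>n::nat. i - int n - 1)) n = b n" by (simp add: f_def b_def add.commute)
  qed
  have h1: "(f has_sum (\<Sum>n. a n)) (range (\<lambda>n::nat. i + int n + 1))"
    using has_sum_reindex[OF ia, of f] ha fa by simp
  have h2: "(f has_sum (\<Sum>n. b n)) (range (\<lambda>n::nat. i - int n - 1))"
    using has_sum_reindex[OF ib, of f] hb fb by simp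
  have disj: "range (\<lambda>n::nat. i + int n + 1) \<inter> range (\<lambda>n::nat. i - int n - 1) = {}" by auto
  have un: "range (\<lambda>n::nat. i + int n + 1) \<union> range (\<lambda>n::nat. i - int n - 1) = -{i}"
  proof (rule set_eqI, rule iffI)
    fix j assume "j \<in> -{i}"
    hence "j > i \<or> j < i" by auto
    thus "j \<in> range (\<lambda>n::nat. i + int n + 1) \<union> range (\<lambda>n::nat. i - int n - 1)"
    proof
      assume "j > i" hence "j = i + int (nat (j - i - 1)) + 1" by simp
      thus ?thesis by (rule UnI1[OF range_eqI])
    next
      assume "j < i" hence "j = i - int (nat (i - j - 1)) - 1" by simp
      thus ?thesis by (rule UnI2[OF range_eqI])
    qed
  next
    fix j assume "j \<in> range (\<lambda>n::nat. i + int n + 1) \<union> range (\<lambda>n::nat. i - int n - 1)"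
    thus "j \<in> -{i}" by auto
  qed
  have "(f has_sum ((\<Sum>n. a n) + (\<Sum>n. b n))) (-{i})"
    using has_sum_Un_disjoint[OF h1 h2 disj] un by simp
  hence "infsum f (-{i}) = (\<Sum>n. a n) + (\<Sum>n. b n)" by (rule infsumI)
  thus ?thesis unfolding f_def a_def b_def .
qed


lemma energy_gx:
  fixes p J :: real and s :: "int \<Rightarrow> real"
  assumes p: "p > 1" and bd: "\<And>y. \<bar>s y\<bar> \<le> 1" and per: "\<And>x. s (x + int N) = s x"
  shows "energy p J N s = (\<Sum>i\<in>{1..int N}. gx p J s i)"
proof -
  define a where "a i n = s i * s (i + int n + 1) / real (n+1) powr p" for i n
  define b where "b i n = s i * s (i - int n - 1) / real (n+1) powr p" for i n
  have sa: "summable (a i)" for i unfolding a_def using summ_aux[where s=s, OF p bd] .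
  have sb: "summable (b i)" for i unfolding b_def using summ_aux[where s=s, OF p bd] .
  have "(\<Sum>i\<in>{1..int N}. suminf (b i)) = (\<Sum>n. \<Sum>i\<in>{1..int N}. b i n)"
    using sb by (rule suminf_sum[symmetric])
  also have "\<dots> = (\<Sum>n. \<Sum>i\<in>{1..int N}. a i n)"
  proof (rule arg_cong[where f=suminf], rule ext)
    fix n
    let ?h = "\<lambda>i. b i n"
    have per': "\<And>x. ?h (x + int N) = ?h x"
      unfolding b_def using per by (metis add.commute add_diff_eq diff_add_eq)
    have "(\<Sum>i\<in>{1..int N}. ?h (i + (int n + 1))) = (\<Sum>i\<in>{1..int N}. ?h i)"
      using per' by (rule periodic_sum_shift)
    moreover have "?h (i + (int n + 1)) = a i n" for i
      unfolding a_def b_def by (simp add: algebra_simps)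
    ultimately show "(\<Sum>i\<in>{1..int N}. b i n) = (\<Sum>i\<in>{1..int N}. a i n)" by simp
  qed
  also have "\<dots> = (\<Sum>i\<in>{1..int N}. suminf (a i))"
    using sa by (rule suminf_sum)
  finally have ab: "(\<Sum>i\<in>{1..int N}. suminf (b i)) = (\<Sum>i\<in>{1..int N}. suminf (a i))" .
  have "energy p J N s = - J * (\<Sum>i=1..int N. s i * s (i + 1))
        + (\<Sum>i=1..int N. suminf (a i) + suminf (b i))"
    unfolding energy_def a_def b_def using infsum_site[where s=s, OF p bd] by (simp only:)
  also have "\<dots> = - J * (\<Sum>i=1..int N. s i * s (i + 1)) + 2 * (\<Sum>i=1..int N. suminf (a i))"
    using ab by (simp add: sum.distrib)
  also have "\<dots> = (\<Sum>i\<in>{1..int N}. gx p J s i)"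
  proof -
    have "(\<Sum>i\<in>{1..int N}. gx p J s i) = (\<Sum>i\<in>{1..int N}. - J * (s i * s (i + 1)) + 2 * suminf (a i))"
      unfolding gx_def a_def by (simp add: mult.assoc)
    also have "\<dots> = - J * (\<Sum>i=1..int N. s i * s (i + 1)) + 2 * (\<Sum>i=1..int N. suminf (a i))"
      by (simp only: sum.distrib sum_distrib_left)
    finally show ?thesis by simp
  qed
  finally show ?thesis .
qed


lemma tail_step:
  fixes p x :: real assumes p: "p > 1" and x: "x \<ge> 1"
  shows "1 / (x+1) powr p \<le> (x powr (1-p) - (x+1) powr (1-p)) / (p-1)"
proof -
  have "\<exists>z. x < z \<and> z < x + 1 \<and> ((x+1) powr (1-p) - x powr (1-p) = ((x+1) - x) * ((1-p) * z powr (1-p-1)))"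
    apply (rule MVT2[where f'="\<lambda>z. (1-p) * z powr (1-p-1)"])
    using x apply simp
    apply (rule has_real_derivative_powr) using x by simp
  then obtain z where z: "x < z" "z < x + 1" and eq: "(x+1) powr (1-p) - x powr (1-p) = (1-p) * z powr (-p)"
    by auto
  have "(x+1) powr (-p) \<le> z powr (-p)" using z x p by (intro powr_mono2') auto
  hence "1 / (x+1) powr p \<le> z powr (-p)" by (simp add: powr_minus divide_inverse)
  also have "z powr (-p) = (x powr (1-p) - (x+1) powr (1-p)) / (p-1)"
    using eq p by (simp add: field_simps)
  finally show ?thesis .
qed

lemma tail_partial:
  fixes p L :: real assumes p: "p > 1" and L: "L \<ge> 1"
  shows "(\<Sum>n<K. 1 / (L + real n + 1) powr p) \<le> (L powr (1-p) - (L + real K) powr (1-p)) / (p-1)"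
proof (induction K)
  case 0 then show ?case by simp
next
  case (Suc K)
  have "1 / (L + real K + 1) powr p \<le> ((L + real K) powr (1-p) - (L + real K + 1) powr (1-p)) / (p-1)"
    using tail_step[OF p, of "L + real K"] L by simp
  moreover have "(L powr (1-p) - (L + real K) powr (1-p)) / (p-1) + ((L + real K) powr (1-p) - (L + real K + 1) powr (1-p)) / (p-1)
     = (L powr (1-p) - (L + real (Suc K)) powr (1-p)) / (p-1)"
    by (simp add: diff_divide_distrib add_ac)
  ultimately show ?case using Suc by simp
qed

definition Kp :: "real \<Rightarrow> real" where "Kp p = 1 + 1 / (p - 1)"

lemma tail_summable:
  fixes p L :: real assumes p: "p > 1" and L: "L \<ge> 1"
  shows "summable (\<lambda>n::nat. 1 / (L + real n) powr p)"
proof (rule summable_comparison_test'[where g="\<lambda>n. 1 / real (n+1) powr p"])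
  show "summable (\<lambda>n. 1 / real (n+1) powr p)" using summable_inv_powr[OF p] .
  fix n :: nat
  have "real (n+1) powr p \<le> (L + real n) powr p" using L p by (intro powr_mono2) auto
  moreover have "real (n+1) powr p > 0" by simp
  ultimately show "norm (1 / (L + real n) powr p) \<le> 1 / real (n+1) powr p"
    using L by (simp add: frac_le)
qed

lemma tail_bound:
  fixes p L :: real assumes p: "p > 1" and L: "L \<ge> 1"
  shows "(\<Sum>n. 1 / (L + real n) powr p) \<le> Kp p * L powr (1-p)"
proof (rule suminf_le_const[OF tail_summable[OF p L]])
  fix K :: nat
  have pos: "(L + real K) powr (1-p) \<ge> 0" by simp
  have "(\<Sum>n<K. 1 / (L + real n) powr p) \<le> (\<Sum>n<Suc K. 1 / (L + real n) powr p)"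
    by (intro sum_mono2) auto
  also have "\<dots> = 1 / L powr p + (\<Sum>n<K. 1 / (L + real n + 1) powr p)"
    by (subst sum.lessThan_Suc_shift) (simp add: ac_simps)
  also have "\<dots> \<le> 1 / L powr p + (L powr (1-p) - (L + real K) powr (1-p)) / (p-1)"
    using tail_partial[OF p L, of K] by simp
  also have "\<dots> \<le> 1 / L powr p + L powr (1-p) / (p-1)"
    using pos p by (intro add_left_mono divide_right_mono) auto
  also have "1 / L powr p \<le> L powr (1-p)"
  proof -
    have "L powr (-p) \<le> L powr (1-p)" using L by (intro powr_mono) auto
    thus ?thesis by (simp add: powr_minus divide_inverse)
  qed
  hence "1 / L powr p + L powr (1-p) / (p-1) \<le> L powr (1-p) + L powr (1-p) / (p-1)" by simp
  also have "\<dots> = Kp p * L powr (1-p)" unfolding Kp_def by (simp add: field_simps)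
  finally show "(\<Sum>n<K. 1 / (L + real n) powr p) \<le> Kp p * L powr (1-p)" .
qed


lemma abs_prod_diff_le2:
  fixes u v w :: real assumes "\<bar>u\<bar> \<le> 1" "\<bar>v\<bar> \<le> 1" "\<bar>w\<bar> \<le> 1"
  shows "\<bar>u * (v - w)\<bar> \<le> 2"
proof -
  have "\<bar>v - w\<bar> \<le> 2" using assms(2,3) by linarith
  hence "\<bar>u\<bar> * \<bar>v - w\<bar> \<le> 1 * 2" using assms(1) by (intro mult_mono) auto
  thus ?thesis by (simp add: abs_mult)
qed

lemma gx_diff_site:
  fixes s t :: "int \<Rightarrow> real"
  assumes p: "p > 1" and bs: "\<And>y. \<bar>s y\<bar> \<le> 1" and bt: "\<And>y. \<bar>t y\<bar> \<le> 1"
    and agree: "\<And>y. x \<le> y \<Longrightarrow> y \<le> c \<Longrightarrow> s y = t y" and xc: "x < c"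
  shows "summable (\<lambda>n. s x * (s (c + 1 + int n) - t (c + 1 + int n)) / real_of_int (c + 1 + int n - x) powr p)"
    and "gx p J s x - gx p J t x = 2 * (\<Sum>n. s x * (s (c + 1 + int n) - t (c + 1 + int n)) / real_of_int (c + 1 + int n - x) powr p)"
proof -
  define f where "f = (\<lambda>n::nat. s x * (s (x + int n + 1) - t (x + int n + 1)) / real (n+1) powr p)"
  have fs: "summable f" unfolding f_def
    using p by (rule summable_bdd_powr[where B=2]) (rule abs_prod_diff_le2[OF bs bs bt])
  define k where "k = nat (c - x)"
  have kx: "x + int k = c" unfolding k_def using xc by simp
  have shift: "(\<lambda>n. f (n + k)) = (\<lambda>n. s x * (s (c + 1 + int n) - t (c + 1 + int n)) / real_of_int (c + 1 + int n - x) powr p)"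
  proof
    fix n
    have e1: "x + int (n + k) + 1 = c + 1 + int n" using kx by simp
    have e2: "real (n + k + 1) = real_of_int (c + 1 + int n - x)" using kx by simp
    show "f (n + k) = s x * (s (c + 1 + int n) - t (c + 1 + int n)) / real_of_int (c + 1 + int n - x) powr p"
      unfolding f_def e1 e2[symmetric] by simp
  qed
  show "summable (\<lambda>n. s x * (s (c + 1 + int n) - t (c + 1 + int n)) / real_of_int (c + 1 + int n - x) powr p)"
    using summable_ignore_initial_segment[OF fs, of k] unfolding shift .
  have init0: "(\<Sum>i<k. f i) = 0"
  proof (rule sum.neutral, rule ballI)
    fix i assume "i \<in> {..<k}"
    hence "x + int i + 1 \<le> c" "x \<le> x + int i + 1" using kx by auto
    thus "f i = 0" unfolding f_def using agree by simp
  qed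
  have sa: "summable (\<lambda>n. s x * s (x + int n + 1) / real (n+1) powr p)" using summ_aux[where s=s, OF p bs] .
  have sb: "summable (\<lambda>n. t x * t (x + int n + 1) / real (n+1) powr p)" using summ_aux[where s=t, OF p bt] .
  have sx: "s x = t x" "s (x+1) = t (x+1)" using agree xc by auto
  have "gx p J s x - gx p J t x = 2 * ((\<Sum>n. s x * s (x + int n + 1) / real (n+1) powr p) - (\<Sum>n. t x * t (x + int n + 1) / real (n+1) powr p))"
    unfolding gx_def using sx by (simp add: algebra_simps)
  also have "\<dots> = 2 * suminf f"
    using suminf_diff[OF sa sb] sx unfolding f_def by (simp add: algebra_simps diff_divide_distrib)
  also have "suminf f = (\<Sum>n. f (n + k))" using suminf_split_initial_segment[OF fs, of k] init0 by simp
  finally show "gx p J s x - gx p J t x = 2 * (\<Sum>n. s x * (s (c + 1 + int n) - t (c + 1 + int n)) / real_of_int (c + 1 + int n - x) powr p)"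
    unfolding shift .
qed

lemma gx_diff_repr:
  fixes s t :: "int \<Rightarrow> real"
  assumes p: "p > 1" and bs: "\<And>y. \<bar>s y\<bar> \<le> 1" and bt: "\<And>y. \<bar>t y\<bar> \<le> 1"
    and agree: "\<And>y. a \<le> y \<Longrightarrow> y \<le> c \<Longrightarrow> s y = t y" and bc: "b < c"
  shows "(\<Sum>x\<in>{a..b}. gx p J s x - gx p J t x) = 2 * (\<Sum>n. \<Sum>x\<in>{a..b}. s x * (s (c + 1 + int n) - t (c + 1 + int n)) / real_of_int (c + 1 + int n - x) powr p)"
proof -
  have "(\<Sum>x\<in>{a..b}. gx p J s x - gx p J t x) = (\<Sum>x\<in>{a..b}. 2 * (\<Sum>n. s x * (s (c + 1 + int n) - t (c + 1 + int n)) / real_of_int (c + 1 + int n - x) powr p))"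
    by (rule sum.cong[OF refl], rule gx_diff_site(2)[OF p bs bt]) (use agree bc in auto)
  also have "\<dots> = 2 * (\<Sum>x\<in>{a..b}. \<Sum>n. s x * (s (c + 1 + int n) - t (c + 1 + int n)) / real_of_int (c + 1 + int n - x) powr p)"
    by (simp add: sum_distrib_left)
  also have "(\<Sum>x\<in>{a..b}. \<Sum>n. s x * (s (c + 1 + int n) - t (c + 1 + int n)) / real_of_int (c + 1 + int n - x) powr p)
     = (\<Sum>n. \<Sum>x\<in>{a..b}. s x * (s (c + 1 + int n) - t (c + 1 + int n)) / real_of_int (c + 1 + int n - x) powr p)"
    by (rule suminf_sum[symmetric], rule gx_diff_site(1)[OF p bs bt]) (use agree bc in auto)
  finally show ?thesis .
qed


lemma abel_bound:
  fixes s w :: "int \<Rightarrow> real"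
  assumes ab: "a \<le> b"
    and H: "\<And>k. a \<le> k \<Longrightarrow> k \<le> b \<Longrightarrow> \<bar>\<Sum>x\<in>{k..b}. s x\<bar> \<le> H"
    and mono: "\<And>x y. a \<le> x \<Longrightarrow> x \<le> y \<Longrightarrow> y \<le> b \<Longrightarrow> w x \<le> w y"
    and nn: "\<And>x. a \<le> x \<Longrightarrow> x \<le> b \<Longrightarrow> w x \<ge> 0"
  shows "\<bar>\<Sum>x\<in>{a..b}. s x * w x\<bar> \<le> H * w b"
proof -
  have claim: "\<forall>k. k = b - int d \<longrightarrow> a \<le> k \<longrightarrow>
      \<bar>(\<Sum>x\<in>{k..b}. s x * w x) - w k * (\<Sum>x\<in>{k..b}. s x)\<bar> \<le> H * (w b - w k)" for d
  proof (induction d)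
    case 0 show ?case by simp
  next
    case (Suc d)
    show ?case
    proof (intro allI impI)
      fix k assume k: "k = b - int (Suc d)" and ak: "a \<le> k"
      define k' where "k' = k + 1"
      have k'b: "k' = b - int d" "k' \<le> b" "a \<le> k'" using k ak unfolding k'_def by auto
      have IH: "\<bar>(\<Sum>x\<in>{k'..b}. s x * w x) - w k' * (\<Sum>x\<in>{k'..b}. s x)\<bar> \<le> H * (w b - w k')"
        using Suc.IH k'b by blast
      have ins: "{k..b} = insert k {k'..b}" using k'b unfolding k'_def by auto
      have nk: "k \<notin> {k'..b}" unfolding k'_def by auto
      have S: "\<bar>\<Sum>x\<in>{k'..b}. s x\<bar> \<le> H" using H k'b by blast
      have wk: "w k \<le> w k'" using mono[of k k'] ak k'b unfolding k'_def by auto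
      have eq: "(\<Sum>x\<in>{k..b}. s x * w x) - w k * (\<Sum>x\<in>{k..b}. s x)
          = ((\<Sum>x\<in>{k'..b}. s x * w x) - w k' * (\<Sum>x\<in>{k'..b}. s x)) + (w k' - w k) * (\<Sum>x\<in>{k'..b}. s x)"
        unfolding ins using nk by (simp add: algebra_simps)
      have "\<bar>(w k' - w k) * (\<Sum>x\<in>{k'..b}. s x)\<bar> \<le> (w k' - w k) * H"
        using S wk by (simp add: abs_mult mult_left_mono)
      thus "\<bar>(\<Sum>x\<in>{k..b}. s x * w x) - w k * (\<Sum>x\<in>{k..b}. s x)\<bar> \<le> H * (w b - w k)"
        unfolding eq using IH by (simp add: algebra_simps)
    qed
  qed
  have c1: "\<bar>(\<Sum>x\<in>{a..b}. s x * w x) - w a * (\<Sum>x\<in>{a..b}. s x)\<bar> \<le> H * (w b - w a)"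
    using claim[of "nat (b - a)"] ab by simp
  have c2: "\<bar>w a * (\<Sum>x\<in>{a..b}. s x)\<bar> \<le> w a * H"
    using H[of a] nn[of a] ab by (simp add: abs_mult mult_left_mono)
  show ?thesis using c1 c2 by (simp add: algebra_simps)
qed

lemma tail_sum_bound:
  fixes g :: "nat \<Rightarrow> real" and p L B :: real
  assumes p: "p > 1" and L: "1 \<le> L" "L \<le> real_of_int (c - b)" and B: "B \<ge> 0"
    and g: "\<And>n. \<bar>g n\<bar> \<le> B * (1 / real_of_int (c + 1 + int n - b) powr p)"
  shows "\<bar>suminf g\<bar> \<le> B * Kp p * L powr (1-p)"
proof -
  define R where "R = real_of_int (c + 1 - b)"
  have R1: "R \<ge> 1" "L \<le> R" using L unfolding R_def by auto
  have gR: "\<bar>g n\<bar> \<le> B * (1 / (R + real n) powr p)" for n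
  proof -
    have e: "real_of_int (c + 1 + int n - b) = R + real n" unfolding R_def by simp
    from g[of n] show ?thesis unfolding e .
  qed
  have sG: "summable (\<lambda>n. B * (1 / (R + real n) powr p))"
    using tail_summable[OF p R1(1)] by (rule summable_mult)
  have "\<bar>suminf g\<bar> \<le> (\<Sum>n. B * (1 / (R + real n) powr p))"
    using norm_suminf_le[of g, OF _ sG] gR by simp
  also have "\<dots> = B * (\<Sum>n. 1 / (R + real n) powr p)"
    using tail_summable[OF p R1(1)] by (rule suminf_mult)
  also have "\<dots> \<le> B * (Kp p * R powr (1-p))"
    using tail_bound[OF p R1(1)] B by (rule mult_left_mono)
  also have "R powr (1-p) \<le> L powr (1-p)"
    using R1 L p by (intro powr_mono2') auto
  hence "B * (Kp p * R powr (1-p)) \<le> B * (Kp p * L powr (1-p))"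
    using B p unfolding Kp_def by (intro mult_left_mono) (auto simp: field_simps)
  finally show ?thesis by (simp add: mult.assoc)
qed


lemma inv_powr_anti:
  fixes r r' p :: real assumes "p > 0" "0 < r'" "r' \<le> r"
  shows "1 / r powr p \<le> 1 / r' powr p"
proof -
  have "r' powr p \<le> r powr p" using assms by (intro powr_mono2) auto
  moreover have "r' powr p > 0" "r powr p > 0" using assms by auto
  ultimately show ?thesis by (intro divide_left_mono) auto
qed

lemma boundA_per:
  fixes s t :: "int \<Rightarrow> real"
  assumes p: "p > 1" and bs: "\<And>y. \<bar>s y\<bar> \<le> 1" and bt: "\<And>y. \<bar>t y\<bar> \<le> 1"
    and agree: "\<And>y. a \<le> y \<Longrightarrow> y \<le> c \<Longrightarrow> s y = t y" and ab: "a \<le> b"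
    and L: "1 \<le> L" "L \<le> real_of_int (c - b)"
    and Hs: "\<And>k. a \<le> k \<Longrightarrow> k \<le> b \<Longrightarrow> \<bar>\<Sum>x\<in>{k..b}. s x\<bar> \<le> H"
  shows "\<bar>\<Sum>x\<in>{a..b}. gx p J s x - gx p J t x\<bar> \<le> 4 * H * Kp p * L powr (1-p)"
proof -
  have bc: "b < c" using L by linarith
  have H0: "H \<ge> 0" using Hs[of b] ab by simp
  define G where "G n = (\<Sum>x\<in>{a..b}. s x * (s (c + 1 + int n) - t (c + 1 + int n)) / real_of_int (c + 1 + int n - x) powr p)" for n
  have rep: "(\<Sum>x\<in>{a..b}. gx p J s x - gx p J t x) = 2 * suminf G"
    unfolding G_def by (rule gx_diff_repr[OF p bs bt agree bc])
  have Gb: "\<bar>G n\<bar> \<le> (2 * H) * (1 / real_of_int (c + 1 + int n - b) powr p)" for n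
  proof -
    define u where "u = s (c + 1 + int n) - t (c + 1 + int n)"
    define w where "w x = 1 / real_of_int (c + 1 + int n - x) powr p" for x
    have Gu: "G n = u * (\<Sum>x\<in>{a..b}. s x * w x)"
      unfolding G_def u_def w_def by (simp add: sum_distrib_left algebra_simps)
    have u2: "\<bar>u\<bar> \<le> 2" unfolding u_def using bs[of "c + 1 + int n"] bt[of "c + 1 + int n"] by linarith
    have ab': "\<bar>\<Sum>x\<in>{a..b}. s x * w x\<bar> \<le> H * w b"
    proof (rule abel_bound[OF ab Hs])
      fix x y assume "a \<le> x" "x \<le> y" "y \<le> b"
      thus "w x \<le> w y" unfolding w_def using p bc by (intro inv_powr_anti) auto
    next
      fix x show "w x \<ge> 0" unfolding w_def by simp
    qed
    have wb: "w b \<ge> 0" unfolding w_def by simp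
    have "\<bar>G n\<bar> = \<bar>u\<bar> * \<bar>\<Sum>x\<in>{a..b}. s x * w x\<bar>" unfolding Gu by (simp add: abs_mult)
    also have "\<dots> \<le> 2 * (H * w b)" using u2 ab' by (intro mult_mono) auto
    finally show ?thesis unfolding w_def by simp
  qed
  have "\<bar>suminf G\<bar> \<le> (2 * H) * Kp p * L powr (1-p)"
    using tail_sum_bound[OF p L _ Gb] H0 by simp
  thus ?thesis unfolding rep by (simp add: abs_mult)
qed

lemma boundA_crude:
  fixes s t :: "int \<Rightarrow> real"
  assumes p: "p > 1" and bs: "\<And>y. \<bar>s y\<bar> \<le> 1" and bt: "\<And>y. \<bar>t y\<bar> \<le> 1"
    and agree: "\<And>y. a \<le> y \<Longrightarrow> y \<le> c \<Longrightarrow> s y = t y" and ab: "a \<le> b"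
    and L: "1 \<le> L" "L \<le> real_of_int (c - b)"
  shows "\<bar>\<Sum>x\<in>{a..b}. gx p J s x - gx p J t x\<bar> \<le> 4 * real_of_int (b - a + 1) * Kp p * L powr (1-p)"
proof -
  have bc: "b < c" using L by linarith
  define G where "G n = (\<Sum>x\<in>{a..b}. s x * (s (c + 1 + int n) - t (c + 1 + int n)) / real_of_int (c + 1 + int n - x) powr p)" for n
  have rep: "(\<Sum>x\<in>{a..b}. gx p J s x - gx p J t x) = 2 * suminf G"
    unfolding G_def by (rule gx_diff_repr[OF p bs bt agree bc])
  have Gb: "\<bar>G n\<bar> \<le> (2 * real_of_int (b - a + 1)) * (1 / real_of_int (c + 1 + int n - b) powr p)" for n
  proof -
    have tm: "\<bar>s x * (s (c + 1 + int n) - t (c + 1 + int n)) / real_of_int (c + 1 + int n - x) powr p\<bar>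
        \<le> 2 * (1 / real_of_int (c + 1 + int n - b) powr p)" if "x \<in> {a..b}" for x
    proof -
      have "\<bar>s x * (s (c + 1 + int n) - t (c + 1 + int n))\<bar> \<le> 2" by (rule abs_prod_diff_le2[OF bs bs bt])
      moreover have "1 / real_of_int (c + 1 + int n - x) powr p \<le> 1 / real_of_int (c + 1 + int n - b) powr p"
        using that p bc by (intro inv_powr_anti) auto
      moreover have "1 / real_of_int (c + 1 + int n - x) powr p \<ge> 0" by simp
      ultimately have "\<bar>s x * (s (c + 1 + int n) - t (c + 1 + int n))\<bar> * (1 / real_of_int (c + 1 + int n - x) powr p)
          \<le> 2 * (1 / real_of_int (c + 1 + int n - b) powr p)" by (intro mult_mono) auto
      thus ?thesis by (simp add: abs_mult abs_divide)
    qed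
    have "\<bar>G n\<bar> \<le> (\<Sum>x\<in>{a..b}. 2 * (1 / real_of_int (c + 1 + int n - b) powr p))"
      unfolding G_def by (rule order.trans[OF sum_abs sum_mono]) (rule tm)
    also have "\<dots> = real (card {a..b}) * (2 * (1 / real_of_int (c + 1 + int n - b) powr p))" by simp
    also have "real (card {a..b}) = real_of_int (b - a + 1)" using ab by simp
    finally show ?thesis by (simp only: mult_ac)
  qed
  have fin: "\<And>X Y. \<bar>Y\<bar> \<le> (2 * X) * Kp p * L powr (1-p) \<Longrightarrow> \<bar>2 * Y\<bar> \<le> 4 * X * Kp p * L powr (1-p)"
    by (simp add: abs_mult)
  have "\<bar>suminf G\<bar> \<le> (2 * real_of_int (b - a + 1)) * Kp p * L powr (1-p)"
    using tail_sum_bound[OF p L _ Gb] ab by simp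
  from fin[OF this] show ?thesis unfolding rep .
qed


lemma sum_take_mono:
  fixes xs :: "nat list" assumes "m \<le> n"
  shows "sum_list (take m xs) \<le> sum_list (take n xs)"
proof -
  have "take n xs = take m xs @ take (n - m) (drop m xs)"
    using assms by (metis le_add_diff_inverse take_add)
  thus ?thesis by simp
qed

lemma block_index_eqI:
  assumes "sum_list (take k hs) \<le> r" "r < sum_list (take (Suc k) hs)"
  shows "block_index hs r = k"
  unfolding block_index_def
proof (rule Least_equality)
  show "r < sum_list (take (Suc k) hs)" by (rule assms(2))
next
  fix j assume j: "r < sum_list (take (Suc j) hs)"
  show "k \<le> j"
  proof (rule ccontr)
    assume "\<not> k \<le> j" hence "Suc j \<le> k" by simp
    hence "sum_list (take (Suc j) hs) \<le> sum_list (take k hs)" by (rule sum_take_mono)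
    thus False using j assms(1) by simp
  qed
qed

lemma block_index_rep:
  assumes h: "h > 0" and r: "r < m * h"
  shows "block_index (A @ replicate m h @ C) (sum_list A + r) = length A + r div h"
proof (rule block_index_eqI)
  have q: "r div h < m" using r h by (simp add: div_less_iff_less_mult)
  have t1: "take (length A + r div h) (A @ replicate m h @ C) = A @ replicate (r div h) h"
    using q by simp
  have t2: "take (Suc (length A + r div h)) (A @ replicate m h @ C) = A @ replicate (Suc (r div h)) h"
    using q by (simp add: Suc_le_eq min_def)
  have e: "r mod h + r div h * h = r" by (rule mod_div_mult_eq)
  have lt: "r mod h < h" using h by simp
  have "r div h * h \<le> r" using e by linarith
  thus "sum_list (take (length A + r div h) (A @ replicate m h @ C)) \<le> sum_list A + r"
    unfolding t1 by (simp add: sum_list_replicate mult.commute)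
  have "r < h + r div h * h" using e lt by linarith
  thus "sum_list A + r < sum_list (take (Suc (length A + r div h)) (A @ replicate m h @ C))"
    unfolding t2 by (simp add: sum_list_replicate mult.commute)
qed

lemma block_index_mid:
  assumes r: "r < sum_list B"
  shows "block_index (A @ B @ C) (sum_list A + r) = length A + block_index B r"
proof -
  define P where "P k = (r < sum_list (take (Suc k) B))" for k
  define k0 where "k0 = block_index B r"
  have k0L: "k0 = (LEAST k. P k)" unfolding k0_def block_index_def P_def ..
  have Bne: "B \<noteq> []" using r by auto
  have Pl: "P (length B - 1)" unfolding P_def using r Bne by simp
  have Pk0: "P k0" unfolding k0L using Pl by (rule LeastI)
  have k0le: "k0 \<le> length B - 1" unfolding k0L using Pl by (rule Least_le)
  have low: "sum_list (take k0 B) \<le> r"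
  proof (cases k0)
    case 0 then show ?thesis by simp
  next
    case (Suc j)
    have "\<not> P j" unfolding k0L by (rule not_less_Least) (use Suc k0L in simp)
    thus ?thesis unfolding P_def using Suc by simp
  qed
  have t1: "take (length A + k0) (A @ B @ C) = A @ take k0 B" using k0le Bne by simp
  have "k0 < length B" using k0le Bne by (cases B) auto
  hence t2: "take (Suc (length A + k0)) (A @ B @ C) = A @ take (Suc k0) B"
    by (simp add: Suc_le_eq)
  show ?thesis unfolding k0_def[symmetric]
  proof (rule block_index_eqI)
    show "sum_list (take (length A + k0) (A @ B @ C)) \<le> sum_list A + r" unfolding t1 using low by simp
    show "sum_list A + r < sum_list (take (Suc (length A + k0)) (A @ B @ C))"
      unfolding t2 using Pk0 unfolding P_def by simp
  qed
qed


definition pih :: "nat \<Rightarrow> int \<Rightarrow> real" where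
  "pih h y = (if even ((y - 1) div int h) then 1 else -1)"

definition phih :: "nat \<Rightarrow> int \<Rightarrow> real" where
  "phih h y = (if even (y div int h) then real_of_int (y mod int h) else real h - real_of_int (y mod int h))"

lemma pih_abs: "\<bar>pih h y\<bar> \<le> 1" unfolding pih_def by simp

lemma pih_shift:
  assumes "h > 0" shows "pih h (y + int h) = - pih h y"
proof -
  have "(y + int h - 1) div int h = (y - 1) div int h + 1"
    using div_add_self2[of "int h" "y - 1"] assms by (simp add: algebra_simps)
  thus ?thesis unfolding pih_def by simp
qed

lemma pih_shift_mult:
  assumes "h > 0" shows "pih h (y + int h * j) = (if even j then pih h y else - pih h y)"
proof -
  have "(y + int h * j - 1) div int h = (y - 1) div int h + j"
    using div_mult_self1[of "int h" "y - 1" j] assms by (simp add: algebra_simps)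
  thus ?thesis unfolding pih_def by auto
qed

lemma phih_bounds:
  assumes "h > 0" shows "0 \<le> phih h y" "phih h y \<le> real h"
proof -
  have "0 \<le> y mod int h" "y mod int h < int h" using assms by auto
  thus "0 \<le> phih h y" "phih h y \<le> real h" unfolding phih_def by auto
qed

lemma phih_diff:
  assumes h: "h > 0" shows "phih h y - phih h (y - 1) = pih h y"
proof -
  define a where "a = y - 1"
  define q where "q = a div int h"
  define r where "r = a mod int h"
  have ar: "a = int h * q + r" unfolding q_def r_def by simp
  have r0: "0 \<le> r" "r < int h" unfolding r_def using h by auto
  have ya: "y = a + 1" unfolding a_def by simp
  show ?thesis
  proof (cases "r + 1 < int h")
    case True
    have e1: "a + 1 = (r + 1) + q * int h" using ar by (simp add: algebra_simps)
    have hz: "int h \<noteq> 0" using h by simp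
    have d: "(a + 1) div int h = q" "(a + 1) mod int h = r + 1"
      unfolding e1 using r0 True hz by (simp_all only: div_mult_self1 mod_mult_self1 div_pos_pos_trivial mod_pos_pos_trivial) simp_all
    have "phih h (a + 1) = (if even q then real_of_int r + 1 else real h - real_of_int r - 1)"
      unfolding phih_def d by simp
    moreover have "phih h a = (if even q then real_of_int r else real h - real_of_int r)"
      unfolding phih_def q_def r_def by simp
    moreover have "pih h (a + 1) = (if even q then 1 else -1)" unfolding pih_def q_def by simp
    ultimately show ?thesis unfolding ya by simp
  next
    case False
    hence rh: "r = int h - 1" using r0 by simp
    have e1: "a + 1 = 0 + (q + 1) * int h" using ar rh by (simp add: algebra_simps)
    have hz: "int h \<noteq> 0" using h by simp
    have d: "(a + 1) div int h = q + 1" "(a + 1) mod int h = 0"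
      unfolding e1 using hz by (simp_all only: div_mult_self1 mod_mult_self1) simp_all
    have "phih h (a + 1) = (if even q then real h else 0)"
      unfolding phih_def d by simp
    moreover have "phih h a = (if even q then real h - 1 else 1)"
      unfolding phih_def q_def[symmetric] r_def[symmetric] rh using h by simp
    moreover have "pih h (a + 1) = (if even q then 1 else -1)" unfolding pih_def q_def by simp
    ultimately show ?thesis unfolding ya by simp
  qed
qed


lemma telescope_int_aux:
  fixes f :: "int \<Rightarrow> real"
  shows "\<forall>k. b - k + 1 = int d \<longrightarrow> (\<Sum>x\<in>{k..b}. f x - f (x - 1)) = f b - f (k - 1)"
proof (induction d)
  case 0 show ?case
  proof (intro allI impI)
    fix k :: int assume "b - k + 1 = int 0"
    hence "k = b + 1" by simp
    thus "(\<Sum>x\<in>{k..b}. f x - f (x - 1)) = f b - f (k - 1)" by simp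
  qed
next
  case (Suc d)
  show ?case
  proof (intro allI impI)
    fix k :: int assume k: "b - k + 1 = int (Suc d)"
    have ins: "{k..b} = insert k {k+1..b}" using k by auto
    have nk: "k \<notin> {k+1..b}" by simp
    have "b - (k + 1) + 1 = int d" using k by simp
    hence IH: "(\<Sum>x\<in>{k+1..b}. f x - f (x - 1)) = f b - f k"
      using Suc.IH by (metis add_diff_cancel_right')
    show "(\<Sum>x\<in>{k..b}. f x - f (x - 1)) = f b - f (k - 1)"
      unfolding ins sum.insert[OF finite_atLeastAtMost nk] IH by simp
  qed
qed

lemma telescope_int:
  fixes f :: "int \<Rightarrow> real"
  assumes "k \<le> b + 1" shows "(\<Sum>x\<in>{k..b}. f x - f (x - 1)) = f b - f (k - 1)"
  using telescope_int_aux[of b "nat (b - k + 1)" f] assms by simp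

lemma pih_suffix:
  assumes h: "h > 0"
  shows "\<bar>\<Sum>x\<in>{k..b}. pih h (x - c)\<bar> \<le> real h"
proof (cases "k \<le> b + 1")
  case False then show ?thesis by simp
next
  case True
  define g where "g y = phih h (y - c)" for y
  have "(\<Sum>x\<in>{k..b}. pih h (x - c)) = (\<Sum>x\<in>{k..b}. g x - g (x - 1))"
  proof (rule sum.cong[OF refl])
    fix x
    have e: "x - 1 - c = x - c - 1" by simp
    show "pih h (x - c) = g x - g (x - 1)" unfolding g_def e using phih_diff[OF h, of "x - c"] by simp
  qed
  also have "\<dots> = g b - g (k - 1)" using True by (rule telescope_int)
  finally show ?thesis using phih_bounds[OF h, of "b - c"] phih_bounds[OF h, of "k - 1 - c"]
    unfolding g_def by simp
qed


lemma gx_shift: "gx p J (\<lambda>y. s (y + c)) x = gx p J s (x + c)"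
  unfolding gx_def by (simp add: ac_simps)

lemma gx_neg: "gx p J (\<lambda>y. - s y) x = gx p J s x"
  unfolding gx_def by simp

lemma gx_cong: "(\<And>y. s y = t y) \<Longrightarrow> gx p J s x = gx p J t x"
  by (metis ext)

lemma gx_pih_per:
  assumes h: "h > 0" shows "gx p J (pih h) (x + int h) = gx p J (pih h) x"
proof -
  have "gx p J (pih h) (x + int h) = gx p J (\<lambda>y. pih h (y + int h)) x" by (rule gx_shift[symmetric])
  also have "\<dots> = gx p J (\<lambda>y. - pih h y) x" using pih_shift[OF h] by simp
  also have "\<dots> = gx p J (pih h) x" by (rule gx_neg)
  finally show ?thesis .
qed

lemma gx_pih_block:
  assumes h: "h > 0"
  shows "(\<Sum>x\<in>{a+1..a+int h}. gx p J (pih h) x) = (\<Sum>x\<in>{1..int h}. gx p J (pih h) x)"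
proof -
  have "(\<Sum>x\<in>{a+1..a+int h}. gx p J (pih h) x) = (\<Sum>x\<in>{1..int h}. gx p J (pih h) (x + a))"
    by (rule sum.reindex_bij_witness[where i="\<lambda>x. x + a" and j="\<lambda>x. x - a"]) auto
  also have "\<dots> = (\<Sum>x\<in>{1..int h}. gx p J (pih h) x)"
    by (rule periodic_sum_shift) (rule gx_pih_per[OF h])
  finally show ?thesis .
qed

lemma gx_pih_blocks:
  assumes h: "h > 0"
  shows "(\<Sum>x\<in>{a+1..a+int (j*h)}. gx p J (pih h) x) = real j * (\<Sum>x\<in>{1..int h}. gx p J (pih h) x)"
proof (induction j)
  case 0 then show ?case by simp
next
  case (Suc j)
  define m where "m = int (j*h)"
  have m0: "m \<ge> 0" unfolding m_def by simp
  have ms: "int (Suc j * h) = m + int h" unfolding m_def by simp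
  have un: "{a+1..a+int (Suc j * h)} = {a+1..a+m} \<union> {(a + m)+1..(a + m)+int h}"
    unfolding ms using m0 by auto
  have dj: "{a+1..a+m} \<inter> {(a + m)+1..(a + m)+int h} = {}" by auto
  show ?case unfolding un sum.union_disjoint[OF finite_atLeastAtMost finite_atLeastAtMost dj]
    gx_pih_block[OF h] using Suc.IH unfolding m_def by (simp add: algebra_simps)
qed

lemma spin_abs: "\<bar>spin_of hs y\<bar> \<le> 1"
  unfolding spin_of_def by simp

lemma spin_per: "spin_of hs (x + int (sum_list hs)) = spin_of hs x"
proof -
  have "x + int (sum_list hs) - 1 = (x - 1) + int (sum_list hs)" by simp
  thus ?thesis unfolding spin_of_def by (simp only: mod_add_self2)
qed

lemma spin_hh:
  assumes h: "h > 0" shows "spin_of [h, h] y = pih h y"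
proof -
  define r where "r = nat ((y - 1) mod int (2*h))"
  have r2: "r < 2 * h" unfolding r_def using h
    by (simp add: nat_less_iff)
  have hh: "[h, h] = [] @ replicate 2 h @ []" by (simp add: numeral_2_eq_2)
  have bi: "block_index [h, h] r = r div h"
    using block_index_rep[OF h, of r 2 "[]" "[]"] r2 hh by (simp add: mult.commute)
  have ir: "int r = (y - 1) mod (int h * int 2)" unfolding r_def using h by (simp add: mult.commute)
  have m2: "(y - 1) mod (int h * int 2) = int h * ((y - 1) div int h mod int 2) + (y - 1) mod int h"
    by (rule mod_mult2_eq')
  have "int (r div h) = int r div int h" by (simp add: zdiv_int)
  also have "\<dots> = (y - 1) div int h mod 2"
  proof -
    have "int r = ((y - 1) mod int h) + ((y - 1) div int h mod 2) * int h"
      using ir m2 by (simp add: algebra_simps)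
    moreover have "((y - 1) mod int h) div int h = 0" using h by simp
    ultimately show ?thesis using h by simp
  qed
  finally have e: "int (r div h) = (y - 1) div int h mod 2" .
  have "even (r div h) \<longleftrightarrow> even ((y - 1) div int h)"
  proof -
    have "even (r div h) \<longleftrightarrow> even (int (r div h))" by simp
    also have "\<dots> \<longleftrightarrow> even ((y - 1) div int h mod 2)" unfolding e ..
    also have "\<dots> \<longleftrightarrow> even ((y - 1) div int h)" by (simp add: even_mod_2_iff)
    finally show ?thesis .
  qed
  moreover have "spin_of [h, h] y = (-1) ^ (r div h)"
    unfolding spin_of_def r_def[symmetric] bi[symmetric] using h by (simp add: r_def)
  ultimately show ?thesis unfolding pih_def by simp
qed

lemma e_per_formula:
  assumes p: "p > 1" and h: "h > 0"
  shows "e_per p J h = (\<Sum>x\<in>{1..int h}. gx p J (pih h) x) / real h"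
proof -
  have sp: "spin_of [h, h] = pih h" using spin_hh[OF h] by auto
  have "E_arr p J [h, h] = energy p J (2*h) (pih h)"
    unfolding E_arr_def sp by (simp add: mult_2)
  also have "\<dots> = (\<Sum>x\<in>{1..int (2*h)}. gx p J (pih h) x)"
  proof (rule energy_gx[OF p])
    show "\<And>y. \<bar>pih h y\<bar> \<le> 1" by (rule pih_abs)
    fix x
    have "pih h (x + int (2*h)) = pih h (x + int h * 2)" by (simp add: algebra_simps)
    also have "\<dots> = pih h x" using pih_shift_mult[OF h, of x 2] by simp
    finally show "pih h (x + int (2 * h)) = pih h x" .
  qed
  also have "\<dots> = 2 * (\<Sum>x\<in>{1..int h}. gx p J (pih h) x)"
    using gx_pih_blocks[OF h, where a=0 and j=2 and p=p and J=J] by (simp add: algebra_simps)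
  finally show ?thesis unfolding e_per_def using h by simp
qed


lemma sum_split_int:
  fixes g :: "int \<Rightarrow> real"
  assumes "a \<le> b + 1" "b \<le> c"
  shows "(\<Sum>x\<in>{a..c}. g x) = (\<Sum>x\<in>{a..b}. g x) + (\<Sum>x\<in>{b+1..c}. g x)"
proof -
  have un: "{a..c} = {a..b} \<union> {b+1..c}" using assms by auto
  have dj: "{a..b} \<inter> {b+1..c} = {}" by auto
  show ?thesis unfolding un by (rule sum.union_disjoint[OF finite_atLeastAtMost finite_atLeastAtMost dj])
qed

lemma local_bound:
  fixes s d :: "int \<Rightarrow> real" and h D K ml mr D0 :: nat and p J m :: real
  assumes p: "p > 1" and h: "h > 0"
    and bs: "\<And>y. \<bar>s y\<bar> \<le> 1" and bd: "\<And>y. \<bar>d y\<bar> \<le> 1"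
    and H1: "\<And>y. 1 - int (2*ml*h) \<le> y \<Longrightarrow> y \<le> int D + int (2*mr*h) \<Longrightarrow> s y = d y"
    and H2: "\<And>y. 1 - int (2*ml*h) \<le> y \<Longrightarrow> y \<le> 0 \<Longrightarrow> s y = pih h y"
    and H3: "\<And>y. int D + 1 \<le> y \<Longrightarrow> y \<le> int D + int (2*mr*h) \<Longrightarrow> s y = pih h (y - int D)"
    and H4: "\<And>y. int D + 1 \<le> y \<Longrightarrow> y \<le> int D + int (K*h) \<Longrightarrow> d y = pih h (y - int D)"
    and K: "ml + mr \<le> K" and m: "2 \<le> m" "m \<le> 2 * real ml" "m \<le> 2 * real mr"
    and D0: "D \<le> D0" and D1: "D \<ge> 1"
  shows "\<bar>(\<Sum>y\<in>{1 - int (ml*h)..int D + int (mr*h)}. gx p J s y - gx p J d y)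
           - (\<Sum>y\<in>{int D + int (mr*h) + 1..int D + int (K*h) - int (ml*h)}. gx p J d y - (\<Sum>x\<in>{1..int h}. gx p J (pih h) x) / real h)\<bar>
         \<le> Kp p * (12 * real h + 4 * real D0) * (m/2) powr (1-p)"
proof -
  define L where "L = m / 2"
  define T where "T = Kp p * L powr (1-p)"
  define eb where "eb = (\<Sum>x\<in>{1..int h}. gx p J (pih h) x) / real h"
  have L1: "1 \<le> L" using m unfolding L_def by simp
  have hr: "real h \<ge> 1" using h by simp
  have Lml: "L \<le> real (ml * h)" "L \<le> real (mr * h)"
  proof -
    have "real ml \<le> real ml * real h" "real mr \<le> real mr * real h" using hr by (simp_all add: mult_le_cancel_left1)
    moreover have "real (ml * h) = real ml * real h" "real (mr * h) = real mr * real h" by simp_all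
    ultimately show "L \<le> real (ml * h)" "L \<le> real (mr * h)" using m unfolding L_def by linarith+
  qed
  have ml1: "ml \<ge> 1" "mr \<ge> 1" using m by linarith+
  have T0: "T \<ge> 0" unfolding T_def Kp_def using p by simp
  have i1: "int (ml*h) \<le> int (2*ml*h)" "int (mr*h) \<le> int (2*mr*h)" by simp_all
  have i2: "0 \<le> int (ml*h)" "0 \<le> int (mr*h)" "0 \<le> int D" by simp_all
  have "(1::int)*1 \<le> int ml * int h" "(1::int)*1 \<le> int mr * int h" using ml1 h by (intro mult_mono; simp)+
  hence i3: "int (ml*h) \<ge> 1" "int (mr*h) \<ge> 1" by simp_all
  have i4: "int (2*mr*h) = 2 * int (mr*h)" "int (2*ml*h) = 2 * int (ml*h)" by simp_all
  have a: "\<bar>\<Sum>y\<in>{1 - int (ml*h)..0}. gx p J s y - gx p J d y\<bar> \<le> 4 * real h * T"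
  proof -
    have "\<bar>\<Sum>y\<in>{1 - int (ml*h)..0}. gx p J s y - gx p J d y\<bar> \<le> 4 * real h * Kp p * L powr (1-p)"
    proof (rule boundA_per[OF p bs bd])
      fix y assume "1 - int (ml*h) \<le> y" "y \<le> int D + int (2*mr*h)"
      thus "s y = d y" by (intro H1) (use i1 in linarith)+
    next
      show "1 - int (ml*h) \<le> 0" using i3 by simp
      show "1 \<le> L" by (rule L1)
      have "L \<le> real (D + 2*mr*h)" using Lml(2) by (rule order_trans) (rule of_nat_mono, simp add: mult.assoc)
      thus "L \<le> real_of_int (int D + int (2*mr*h) - 0)" by simp
      fix k assume k: "1 - int (ml*h) \<le> k" "k \<le> 0"
      have "(\<Sum>x\<in>{k..0}. s x) = (\<Sum>x\<in>{k..0}. pih h (x - 0))"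
      proof (rule sum.cong[OF refl])
        fix x assume "x \<in> {k..0}"
        hence "1 - int (2*ml*h) \<le> x" "x \<le> 0" using k i1 by auto
        thus "s x = pih h (x - 0)" using H2 by simp
      qed
      thus "\<bar>\<Sum>x\<in>{k..0}. s x\<bar> \<le> real h" using pih_suffix[OF h, where k=k and b=0 and c=0] by simp
    qed
    thus ?thesis unfolding T_def by (simp add: mult.assoc)
  qed
  have Lmr2: "L \<le> real_of_int (int D + int (2*mr*h) - int D)"
  proof -
    have "L \<le> real (2*mr*h)" using Lml(2) by (rule order_trans) (rule of_nat_mono, simp add: mult.assoc)
    thus ?thesis by simp
  qed
  have b: "\<bar>\<Sum>y\<in>{1..int D}. gx p J s y - gx p J d y\<bar> \<le> 4 * real D * T"
  proof -
    have "\<bar>\<Sum>y\<in>{1..int D}. gx p J s y - gx p J d y\<bar> \<le> 4 * real_of_int (int D - 1 + 1) * Kp p * L powr (1-p)"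
    proof (rule boundA_crude[OF p bs bd])
      fix y assume "1 \<le> y" "y \<le> int D + int (2*mr*h)"
      thus "s y = d y" by (intro H1) (use i2 in linarith)+
    next
      show "1 \<le> int D" using D1 by simp
      show "1 \<le> L" by (rule L1)
      show "L \<le> real_of_int (int D + int (2*mr*h) - int D)" by (rule Lmr2)
    qed
    thus ?thesis unfolding T_def by (simp add: mult.assoc)
  qed
  have c: "\<bar>\<Sum>y\<in>{int D + 1..int D + int (mr*h)}. gx p J s y - gx p J d y\<bar> \<le> 4 * real h * T"
  proof -
    have "\<bar>\<Sum>y\<in>{int D + 1..int D + int (mr*h)}. gx p J s y - gx p J d y\<bar> \<le> 4 * real h * Kp p * L powr (1-p)"
    proof (rule boundA_per[OF p bs bd])
      fix y assume "int D + 1 \<le> y" "y \<le> int D + int (2*mr*h)"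
      thus "s y = d y" by (intro H1) (use i2 in linarith)+
    next
      show "int D + 1 \<le> int D + int (mr*h)" using i3 by simp
      show "1 \<le> L" by (rule L1)
      show "L \<le> real_of_int (int D + int (2*mr*h) - (int D + int (mr*h)))" using Lml(2) i4 by (simp add: mult.commute)
      fix k assume k: "int D + 1 \<le> k" "k \<le> int D + int (mr*h)"
      have "(\<Sum>x\<in>{k..int D + int (mr*h)}. s x) = (\<Sum>x\<in>{k..int D + int (mr*h)}. pih h (x - int D))"
      proof (rule sum.cong[OF refl])
        fix x assume "x \<in> {k..int D + int (mr*h)}"
        hence "int D + 1 \<le> x" "x \<le> int D + int (2*mr*h)" using k i1 by auto
        thus "s x = pih h (x - int D)" using H3 by simp
      qed
      thus "\<bar>\<Sum>x\<in>{k..int D + int (mr*h)}. s x\<bar> \<le> real h"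
        using pih_suffix[OF h, where k=k and b="int D + int (mr*h)" and c="int D"] by simp
    qed
    thus ?thesis unfolding T_def by (simp add: mult.assoc)
  qed
  define j where "j = K - ml - mr"
  have Kj0: "K = ml + mr + j" unfolding j_def using K by simp
  have Kj: "K * h = ml * h + mr * h + j * h" unfolding Kj0 by (simp add: add_mult_distrib)
  define rho where "rho y = pih h (y - int D)" for y
  have brho: "\<And>y. \<bar>rho y\<bar> \<le> 1" unfolding rho_def by (rule pih_abs)
  have ub: "int D + int (K*h) - int (ml*h) = (int D + int (mr*h)) + int (j*h)" unfolding Kj by simp
  have dpart: "\<bar>\<Sum>y\<in>{int D + int (mr*h) + 1..int D + int (K*h) - int (ml*h)}. gx p J d y - gx p J rho y\<bar> \<le> 4 * real h * T"
  proof (cases "j = 0")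
    case True
    hence "int D + int (K*h) - int (ml*h) < int D + int (mr*h) + 1" unfolding ub by simp
    thus ?thesis using T0 by simp
  next
    case False
    have "(1::int)*1 \<le> int j * int h" using False h by (intro mult_mono; simp)
    hence jh: "int (j*h) \<ge> 1" by simp
    have "\<bar>\<Sum>y\<in>{int D + int (mr*h) + 1..int D + int (K*h) - int (ml*h)}. gx p J d y - gx p J rho y\<bar> \<le> 4 * real h * Kp p * L powr (1-p)"
    proof (rule boundA_per[OF p bd brho])
      fix y assume "int D + int (mr*h) + 1 \<le> y" "y \<le> int D + int (K*h)"
      thus "d y = rho y" unfolding rho_def by (intro H4) (use i2 in linarith)+
    next
      show "int D + int (mr*h) + 1 \<le> int D + int (K*h) - int (ml*h)" unfolding ub using jh by simp
      show "1 \<le> L" by (rule L1)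
      show "L \<le> real_of_int (int D + int (K*h) - (int D + int (K*h) - int (ml*h)))" using Lml(1) by simp
      fix k assume k: "int D + int (mr*h) + 1 \<le> k" "k \<le> int D + int (K*h) - int (ml*h)"
      have "(\<Sum>x\<in>{k..int D + int (K*h) - int (ml*h)}. d x) = (\<Sum>x\<in>{k..int D + int (K*h) - int (ml*h)}. pih h (x - int D))"
      proof (rule sum.cong[OF refl])
        fix x assume "x \<in> {k..int D + int (K*h) - int (ml*h)}"
        hence "k \<le> x" "x \<le> int D + int (K*h) - int (ml*h)" by simp_all
        hence "int D + 1 \<le> x" "x \<le> int D + int (K*h)" using k i2 by linarith+
        thus "d x = pih h (x - int D)" using H4 by simp
      qed
      thus "\<bar>\<Sum>x\<in>{k..int D + int (K*h) - int (ml*h)}. d x\<bar> \<le> real h"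
        using pih_suffix[OF h, where k=k and b="int D + int (K*h) - int (ml*h)" and c="int D"] by simp
    qed
    thus ?thesis unfolding T_def by (simp add: mult.assoc)
  qed
  have zero: "(\<Sum>y\<in>{int D + int (mr*h) + 1..int D + int (K*h) - int (ml*h)}. gx p J rho y - eb) = 0"
  proof -
    have "(\<Sum>y\<in>{int D + int (mr*h) + 1..int D + int (K*h) - int (ml*h)}. gx p J rho y)
        = (\<Sum>y\<in>{int D + int (mr*h) + 1..int D + int (K*h) - int (ml*h)}. gx p J (pih h) (y + - int D))"
      unfolding rho_def using gx_shift[where s="pih h" and c="- int D"] by simp
    also have "\<dots> = (\<Sum>x\<in>{int (mr*h) + 1..int (mr*h) + int (j*h)}. gx p J (pih h) x)"
      unfolding ub by (rule sum.reindex_bij_witness[where i="\<lambda>x. x + int D" and j="\<lambda>y. y - int D"]) auto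
    also have "\<dots> = real j * (\<Sum>x\<in>{1..int h}. gx p J (pih h) x)" by (rule gx_pih_blocks[OF h])
    also have "\<dots> = real (j*h) * eb" unfolding eb_def using h by simp
    finally have e1: "(\<Sum>y\<in>{int D + int (mr*h) + 1..int D + int (K*h) - int (ml*h)}. gx p J rho y) = real (j*h) * eb" .
    have cd: "card {int D + int (mr*h) + 1..int D + int (K*h) - int (ml*h)} = j * h" unfolding ub by (simp del: of_nat_mult)
    show ?thesis using e1 cd by (simp add: sum_subtractf)
  qed
  have split1: "(\<Sum>y\<in>{1 - int (ml*h)..int D + int (mr*h)}. gx p J s y - gx p J d y)
     = (\<Sum>y\<in>{1 - int (ml*h)..0}. gx p J s y - gx p J d y) + (\<Sum>y\<in>{1..int D}. gx p J s y - gx p J d y)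
       + (\<Sum>y\<in>{int D + 1..int D + int (mr*h)}. gx p J s y - gx p J d y)"
  proof -
    have "(\<Sum>y\<in>{1 - int (ml*h)..int D + int (mr*h)}. gx p J s y - gx p J d y)
       = (\<Sum>y\<in>{1 - int (ml*h)..0}. gx p J s y - gx p J d y) + (\<Sum>y\<in>{0+1..int D + int (mr*h)}. gx p J s y - gx p J d y)"
      by (rule sum_split_int) (use i2 in simp_all)
    also have "(\<Sum>y\<in>{0+1..int D + int (mr*h)}. gx p J s y - gx p J d y)
       = (\<Sum>y\<in>{1..int D}. gx p J s y - gx p J d y) + (\<Sum>y\<in>{int D + 1..int D + int (mr*h)}. gx p J s y - gx p J d y)"
      by (simp only: add_0_left, rule sum_split_int) (use i2 in simp_all)
    finally show ?thesis by simp
  qed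
  have split2: "(\<Sum>y\<in>{int D + int (mr*h) + 1..int D + int (K*h) - int (ml*h)}. gx p J d y - eb)
     = (\<Sum>y\<in>{int D + int (mr*h) + 1..int D + int (K*h) - int (ml*h)}. gx p J d y - gx p J rho y)
       + (\<Sum>y\<in>{int D + int (mr*h) + 1..int D + int (K*h) - int (ml*h)}. gx p J rho y - eb)"
    by (simp add: sum.distrib[symmetric])
  have "\<bar>(\<Sum>y\<in>{1 - int (ml*h)..int D + int (mr*h)}. gx p J s y - gx p J d y)
           - (\<Sum>y\<in>{int D + int (mr*h) + 1..int D + int (K*h) - int (ml*h)}. gx p J d y - eb)\<bar>
        \<le> 4 * real h * T + 4 * real D * T + 4 * real h * T + 4 * real h * T"
    unfolding split1 split2 zero using a b c dpart by linarith
  also have "\<dots> \<le> Kp p * (12 * real h + 4 * real D0) * (m/2) powr (1-p)"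
  proof -
    have "real D \<le> real D0" using D0 by simp
    hence "real D * T \<le> real D0 * T" using T0 by (rule mult_right_mono)
    hence "4 * real h * T + 4 * real D * T + 4 * real h * T + 4 * real h * T \<le> (12 * real h + 4 * real D0) * T"
      by (simp add: algebra_simps)
    thus ?thesis unfolding T_def L_def by (simp add: mult_ac)
  qed
  finally show ?thesis unfolding eb_def .
qed


lemma sum_list_concat_nat: "sum_list (concat xss) = sum_list (map sum_list (xss :: nat list list))"
  by (induct xss) auto

lemma length_concat_nat: "length (concat xss) = sum_list (map length xss)"
  by (induct xss) auto

lemma spin_struct_D:
  fixes Pre Dl Post :: "nat list"
  assumes y: "1 \<le> y" "y \<le> int (sum_list Dl)"
  shows "spin_of (Pre @ Dl @ replicate M h @ Post) (int (sum_list Pre) + y)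
       = (-1) ^ length Pre * (-1) ^ block_index Dl (nat (y - 1))"
proof -
  define L where "L = Pre @ Dl @ replicate M h @ Post"
  define r where "r = nat (y - 1)"
  have rD: "r < sum_list Dl" unfolding r_def using y by linarith
  have NL: "sum_list L = sum_list Pre + sum_list Dl + (sum_list (replicate M h) + sum_list Post)"
    unfolding L_def by simp
  have x1: "int (sum_list Pre) + y - 1 = int (sum_list Pre + r)" unfolding r_def using y by simp
  have md: "(int (sum_list Pre) + y - 1) mod int (sum_list L) = int (sum_list Pre + r)"
    unfolding x1 using rD NL by (intro mod_pos_pos_trivial) simp_all
  have bi: "block_index (Pre @ Dl @ (replicate M h @ Post)) (sum_list Pre + r) = length Pre + block_index Dl r"
    by (rule block_index_mid[OF rD])
  show ?thesis unfolding L_def[symmetric] spin_of_def md nat_int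
    using bi unfolding L_def r_def by (simp add: power_add)
qed

lemma spin_struct_R:
  fixes Pre Dl Post :: "nat list"
  assumes h: "h > 0" and y: "1 \<le> y" "y \<le> int (M * h)"
  shows "spin_of (Pre @ Dl @ replicate M h @ Post) (int (sum_list Pre + sum_list Dl) + y)
       = (-1) ^ (length Pre + length Dl) * pih h y"
proof -
  define L where "L = Pre @ Dl @ replicate M h @ Post"
  define A where "A = Pre @ Dl"
  define r where "r = nat (y - 1)"
  have rD: "r < M * h" unfolding r_def using y by linarith
  have NL: "sum_list L = sum_list A + M * h + sum_list Post"
    unfolding L_def A_def by (simp add: sum_list_replicate)
  have x1: "int (sum_list Pre + sum_list Dl) + y - 1 = int (sum_list A + r)" unfolding r_def A_def using y by simp
  have lt: "sum_list A + r < sum_list L" using rD NL by simp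
  have md: "(int (sum_list Pre + sum_list Dl) + y - 1) mod int (sum_list L) = int (sum_list A + r)"
    unfolding x1 using lt by (intro mod_pos_pos_trivial) simp_all
  have LA: "L = A @ replicate M h @ Post" unfolding L_def A_def by simp
  have bi: "block_index L (sum_list A + r) = length A + r div h"
    unfolding LA by (rule block_index_rep[OF h rD])
  have pe: "pih h y = (-1) ^ (r div h)"
  proof -
    have "(y - 1) div int h = int r div int h" unfolding r_def using y by simp
    also have "\<dots> = int (r div h)" by (simp add: zdiv_int)
    finally have "even ((y - 1) div int h) \<longleftrightarrow> even (r div h)" by simp
    thus ?thesis unfolding pih_def by simp
  qed
  show ?thesis unfolding L_def[symmetric] spin_of_def md nat_int bi pe
    unfolding A_def by (simp add: power_add)
qed

lemma gx_per:
  assumes per: "\<And>y. s (y + int N) = s y"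
  shows "gx p J s (x + int N) = gx p J s x"
proof -
  have "gx p J s (x + int N) = gx p J (\<lambda>y. s (y + int N)) x" by (rule gx_shift[symmetric])
  also have "(\<lambda>y. s (y + int N)) = s" using per by auto
  finally show ?thesis .
qed

lemma rotate_sum:
  fixes G :: "int \<Rightarrow> real"
  assumes per: "\<And>x. G (x + int N) = G x"
  shows "(\<Sum>x\<in>{1..int N}. G x) = (\<Sum>x\<in>{1 + c..int N + c}. G x)"
proof -
  have "(\<Sum>x\<in>{1..int N}. G x) = (\<Sum>x\<in>{1..int N}. G (x + c))"
    by (rule periodic_sum_shift[symmetric]) (rule per)
  also have "\<dots> = (\<Sum>x\<in>{1 + c..int N + c}. G x)"
    by (rule sum.reindex_bij_witness[where i="\<lambda>x. x - c" and j="\<lambda>x. x + c"]) auto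
  finally show ?thesis .
qed

lemma F_arr_sum:
  assumes p: "p > 1" and h: "h > 0"
  shows "F_arr p J h L = (\<Sum>x\<in>{1 + c..int (sum_list L) + c}. gx p J (spin_of L) x - e_per p J h)"
proof -
  let ?N = "sum_list L"
  have per: "\<And>y. spin_of L (y + int ?N) = spin_of L y" by (rule spin_per)
  have "E_arr p J L = (\<Sum>x\<in>{1..int ?N}. gx p J (spin_of L) x)"
    unfolding E_arr_def by (rule energy_gx[where s="spin_of L", OF p spin_abs[of L] per])
  hence "F_arr p J h L = (\<Sum>x\<in>{1..int ?N}. gx p J (spin_of L) x - e_per p J h)"
    unfolding F_arr_def by (simp add: sum_subtractf)
  also have "\<dots> = (\<Sum>x\<in>{1 + c..int ?N + c}. gx p J (spin_of L) x - e_per p J h)"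
    by (rule rotate_sum) (simp only: gx_per[where s="spin_of L", OF per])
  finally show ?thesis .
qed

lemma tile_sum:
  fixes e :: "nat \<Rightarrow> int" and g :: "int \<Rightarrow> real"
  shows "(\<forall>i<n. e i \<le> e (Suc i)) \<Longrightarrow> (\<Sum>x\<in>{e 0 + 1..e n}. g x) = (\<Sum>i\<in>{1..n}. \<Sum>x\<in>{e (i-1) + 1..e i}. g x)"
proof (induction n)
  case 0 then show ?case by simp
next
  case (Suc n)
  have mono: "e 0 \<le> e n" using Suc.prems
  proof (induction n)
    case 0 then show ?case by simp
  next
    case (Suc n) then show ?case by (metis less_Suc_eq order_trans)
  qed
  have "(\<Sum>x\<in>{e 0 + 1..e (Suc n)}. g x) = (\<Sum>x\<in>{e 0 + 1..e n}. g x) + (\<Sum>x\<in>{e n + 1..e (Suc n)}. g x)"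
    by (rule sum_split_int) (use mono Suc.prems in auto)
  also have "(\<Sum>x\<in>{e 0 + 1..e n}. g x) = (\<Sum>i\<in>{1..n}. \<Sum>x\<in>{e (i-1) + 1..e i}. g x)"
    using Suc by simp
  finally show ?case by simp
qed


context
  fixes h S :: nat and Dl :: "nat \<Rightarrow> nat list" and Mb :: "nat \<Rightarrow> nat"
  assumes h: "h > 0" and S1: "S \<ge> 1"
   and Dpos: "\<forall>i\<in>{1..S}. Dl i \<noteq> [] \<and> (\<forall>x\<in>set (Dl i). x > 0)"
   and Mev: "\<forall>i\<in>{1..S}. Mb i > 0 \<and> even (Mb i)"
   and par: "\<forall>i\<in>{1..S}. \<forall>j\<in>{1..S}.
          even ((\<Sum>k=1..<i. length (Dl k) + Mb k) + length (Dl i))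
          = even ((\<Sum>k=1..<j. length (Dl k) + Mb k) + length (Dl j))"
   and tot: "even (\<Sum>i=1..S. length (Dl i) + Mb i)"
begin

definition "ff i = Dl i @ replicate (Mb i) h"
definition "sig = concat (map ff [1..<S+1])"
definition "Pre i = concat (map ff [1..<i])"
definition "Post i = concat (map ff [Suc i..<S+1])"
definition "qq i = (\<Sum>k\<in>{1..<i}. sum_list (Dl k) + Mb k * h)"
definition "bb i = (\<Sum>k\<in>{1..<i}. length (Dl k) + Mb k)"

lemma sig_split: "1 \<le> i \<Longrightarrow> i \<le> S \<Longrightarrow> sig = Pre i @ Dl i @ replicate (Mb i) h @ Post i"
proof -
  assume i: "1 \<le> i" "i \<le> S"
  have "[1..<S+1] = [1..<i] @ [i..<i + (S + 1 - i)]"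
    using i upt_add_eq_append[of 1 i "S + 1 - i"] by simp
  also have "[i..<i + (S + 1 - i)] = i # [Suc i..<S+1]" using i by (simp add: upt_conv_Cons)
  finally show ?thesis unfolding sig_def Pre_def Post_def ff_def by simp
qed

lemma sum_Pre: "sum_list (Pre i) = qq i"
proof -
  have "sum_list (Pre i) = sum_list (map (\<lambda>k. sum_list (Dl k) + Mb k * h) [1..<i])"
    unfolding Pre_def sum_list_concat_nat map_map ff_def by (simp add: comp_def sum_list_replicate)
  also have "\<dots> = qq i" unfolding qq_def sum_set_upt_conv_sum_list_nat[symmetric] by simp
  finally show ?thesis .
qed

lemma len_Pre: "length (Pre i) = bb i"
proof -
  have "length (Pre i) = sum_list (map (\<lambda>k. length (Dl k) + Mb k) [1..<i])"
    unfolding Pre_def length_concat_nat map_map ff_def by (simp add: comp_def)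
  also have "\<dots> = bb i" unfolding bb_def sum_set_upt_conv_sum_list_nat[symmetric] by simp
  finally show ?thesis .
qed

lemma sig_Pre: "sig = Pre (S+1)" unfolding sig_def Pre_def ..

lemma qq_Suc: "1 \<le> i \<Longrightarrow> qq (Suc i) = qq i + sum_list (Dl i) + Mb i * h"
  unfolding qq_def by (simp add: sum.atLeastLessThan_Suc)

lemma bb_Suc: "1 \<le> i \<Longrightarrow> bb (Suc i) = bb i + length (Dl i) + Mb i"
  unfolding bb_def by (simp add: sum.atLeastLessThan_Suc)

lemma qq1: "qq 1 = 0" and bb1: "bb 1 = 0" unfolding qq_def bb_def by simp_all

lemma Mb_even: "i \<in> {1..S} \<Longrightarrow> even (Mb i)" using Mev by blast

lemma par_all: "i \<in> {1..S} \<Longrightarrow> even (bb i + length (Dl i))"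
proof -
  assume i: "i \<in> {1..S}"
  have "bb (Suc S) = bb S + length (Dl S) + Mb S" using S1 by (rule bb_Suc)
  moreover have "bb (Suc S) = (\<Sum>i=1..S. length (Dl i) + Mb i)"
    unfolding bb_def by (simp add: atLeastLessThanSuc_atLeastAtMost)
  ultimately have "even (bb S + length (Dl S))" using tot Mb_even[of S] S1 by auto
  moreover have Sin: "S \<in> {1..S}" using S1 by simp
  moreover have "even (bb i + length (Dl i)) = even (bb S + length (Dl S))"
    unfolding bb_def by (rule bspec[OF bspec[OF par i] Sin])
  ultimately show ?thesis by simp
qed

lemma bb_even: "i \<in> {1..S} \<Longrightarrow> even (bb i)"
proof -
  assume i: "i \<in> {1..S}"
  show ?thesis
  proof (cases "i = 1")
    case True then show ?thesis unfolding bb_def by simp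
  next
    case False
    then obtain j where j: "i = Suc j" "j \<in> {1..S}" using i by (cases i) auto
    have "bb i = (bb j + length (Dl j)) + Mb j" using bb_Suc[of j] j by simp
    thus ?thesis using par_all[OF j(2)] Mb_even[OF j(2)] by simp
  qed
qed

lemma len_even: "i \<in> {1..S} \<Longrightarrow> even (length (Dl i))"
proof -
  assume i: "i \<in> {1..S}"
  show ?thesis using par_all[OF i] bb_even[OF i] by simp
qed

definition "ss = spin_of sig"
definition "dd i y = ((-1) ^ block_index (Dl i) (nat (y - 1)) :: real)"
definition "NN = sum_list sig"

lemma NN_eq: "NN = qq (Suc S)" unfolding NN_def sig_Pre sum_Pre by simp

lemma sD: "i \<in> {1..S} \<Longrightarrow> 1 \<le> y \<Longrightarrow> y \<le> int (sum_list (Dl i)) \<Longrightarrow> ss (int (qq i) + y) = dd i y"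
proof -
  assume i: "i \<in> {1..S}" and y: "1 \<le> y" "y \<le> int (sum_list (Dl i))"
  have "ss (int (qq i) + y) = spin_of (Pre i @ Dl i @ replicate (Mb i) h @ Post i) (int (sum_list (Pre i)) + y)"
  proof -
    have e: "sig = Pre i @ Dl i @ replicate (Mb i) h @ Post i" using sig_split i by simp
    show ?thesis by (simp only: ss_def e sum_Pre)
  qed
  also have "\<dots> = (-1) ^ length (Pre i) * (-1) ^ block_index (Dl i) (nat (y - 1))"
    by (rule spin_struct_D[OF y])
  finally show ?thesis unfolding len_Pre dd_def using bb_even[OF i] by simp
qed

lemma sR: "i \<in> {1..S} \<Longrightarrow> 1 \<le> y \<Longrightarrow> y \<le> int (Mb i * h) \<Longrightarrow> ss (int (qq i + sum_list (Dl i)) + y) = pih h y"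
proof -
  assume i: "i \<in> {1..S}" and y: "1 \<le> y" "y \<le> int (Mb i * h)"
  have "ss (int (qq i + sum_list (Dl i)) + y) = spin_of (Pre i @ Dl i @ replicate (Mb i) h @ Post i) (int (sum_list (Pre i) + sum_list (Dl i)) + y)"
  proof -
    have e: "sig = Pre i @ Dl i @ replicate (Mb i) h @ Post i" using sig_split i by simp
    show ?thesis by (simp only: ss_def e sum_Pre)
  qed
  also have "\<dots> = (-1) ^ (length (Pre i) + length (Dl i)) * pih h y"
    by (rule spin_struct_R[OF h y])
  finally show ?thesis unfolding len_Pre using par_all[OF i] by simp
qed

definition "prv i = (if i = 1 then S else i - 1)"

lemma prv_in: "i \<in> {1..S} \<Longrightarrow> prv i \<in> {1..S}" unfolding prv_def using S1 by auto

lemma qq_prv: "i \<in> {1..S} \<Longrightarrow> int (qq i) + (if i = 1 then int NN else 0) = int (qq (prv i) + sum_list (Dl (prv i))) + int (Mb (prv i) * h)"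
proof -
  assume i: "i \<in> {1..S}"
  show ?thesis
  proof (cases "i = 1")
    case True
    then show ?thesis unfolding prv_def NN_eq using qq_Suc[OF S1] qq1 by simp
  next
    case False
    then obtain j where j: "i = Suc j" "j \<ge> 1" using i by (cases i) auto
    then show ?thesis unfolding prv_def using False qq_Suc[OF j(2)] by simp
  qed
qed

lemma sL: "i \<in> {1..S} \<Longrightarrow> 1 - int (Mb (prv i) * h) \<le> y \<Longrightarrow> y \<le> 0 \<Longrightarrow> ss (int (qq i) + y) = pih h y"
proof -
  assume i: "i \<in> {1..S}" and y: "1 - int (Mb (prv i) * h) \<le> y" "y \<le> 0"
  have per: "ss (int (qq i) + y) = ss (int (qq i) + (if i = 1 then int NN else 0) + y)"
  proof (cases "i = 1")
    case True
    have "ss (int (qq i) + y + int NN) = ss (int (qq i) + y)"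
      unfolding ss_def NN_def by (rule spin_per)
    thus ?thesis using True by (simp add: ac_simps)
  qed simp
  also have "\<dots> = ss (int (qq (prv i) + sum_list (Dl (prv i))) + (int (Mb (prv i) * h) + y))"
    using qq_prv[OF i] by (simp add: ac_simps)
  also have "\<dots> = pih h (int (Mb (prv i) * h) + y)"
    by (rule sR[OF prv_in[OF i]]) (use y in auto)
  also have "\<dots> = pih h y"
  proof -
    have "pih h (y + int h * int (Mb (prv i))) = pih h y"
      using pih_shift_mult[OF h, of y "int (Mb (prv i))"] Mb_even[OF prv_in[OF i]] by simp
    thus ?thesis by (simp add: ac_simps)
  qed
  finally show ?thesis .
qed

lemma Dz_pos: "i \<in> {1..S} \<Longrightarrow> sum_list (Dl i) \<ge> 1"
proof -
  assume i: "i \<in> {1..S}"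
  have ne: "Dl i \<noteq> []" and pos: "\<forall>x\<in>set (Dl i). x > 0" using Dpos i by auto
  then obtain a t where at: "Dl i = a # t" by (cases "Dl i") auto
  have "a > 0" using pos at by simp
  thus ?thesis using at by simp
qed

lemma Mb_ge2: "i \<in> {1..S} \<Longrightarrow> Mb i \<ge> 2"
proof -
  assume i: "i \<in> {1..S}"
  have "Mb i > 0" "even (Mb i)" using Mev i by auto
  thus ?thesis by (metis dvd_imp_le even_zero le_less less_2_cases_iff numeral_2_eq_2 odd_one zero_less_Suc nat_dvd_not_less not_less Suc_1)
qed

context
  fixes Kf :: "nat \<Rightarrow> nat"
  assumes Kev: "\<forall>i\<in>{1..S}. even (Kf i) \<and> (\<Sum>i=1..S. Mb i) \<le> Kf i"
begin

definition "dl i = Dl i @ replicate (Kf i) h"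
definition "dsp i = spin_of (dl i)"

lemma dD: "1 \<le> y \<Longrightarrow> y \<le> int (sum_list (Dl i)) \<Longrightarrow> dsp i y = dd i y"
proof -
  assume y: "1 \<le> y" "y \<le> int (sum_list (Dl i))"
  have "spin_of ([] @ Dl i @ replicate (Kf i) h @ []) (int (sum_list []) + y) = (-1) ^ length ([]::nat list) * (-1) ^ block_index (Dl i) (nat (y - 1))"
    by (rule spin_struct_D[OF y])
  thus ?thesis unfolding dsp_def dl_def dd_def by simp
qed

lemma dR: "i \<in> {1..S} \<Longrightarrow> 1 \<le> y \<Longrightarrow> y \<le> int (Kf i * h) \<Longrightarrow> dsp i (int (sum_list (Dl i)) + y) = pih h y"
proof -
  assume i: "i \<in> {1..S}" and y: "1 \<le> y" "y \<le> int (Kf i * h)"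
  have "spin_of ([] @ Dl i @ replicate (Kf i) h @ []) (int (sum_list [] + sum_list (Dl i)) + y) = (-1) ^ (length ([]::nat list) + length (Dl i)) * pih h y"
    by (rule spin_struct_R[OF h y])
  thus ?thesis unfolding dsp_def dl_def using len_even[OF i] by simp
qed

lemma dL: "i \<in> {1..S} \<Longrightarrow> 1 - int (Kf i * h) \<le> y \<Longrightarrow> y \<le> 0 \<Longrightarrow> dsp i y = pih h y"
proof -
  assume i: "i \<in> {1..S}" and y: "1 - int (Kf i * h) \<le> y" "y \<le> 0"
  have sl: "sum_list (dl i) = sum_list (Dl i) + Kf i * h" unfolding dl_def by (simp add: sum_list_replicate)
  have "dsp i y = dsp i (y + int (sum_list (dl i)))" unfolding dsp_def by (rule spin_per[symmetric])
  also have "\<dots> = dsp i (int (sum_list (Dl i)) + (int (Kf i * h) + y))" unfolding sl by (simp add: ac_simps)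
  also have "\<dots> = pih h (int (Kf i * h) + y)" by (rule dR[OF i]) (use y in auto)
  also have "\<dots> = pih h y"
  proof -
    have "pih h (y + int h * int (Kf i)) = pih h y"
      using pih_shift_mult[OF h, of y "int (Kf i)"] Kev i by simp
    thus ?thesis by (simp add: ac_simps)
  qed
  finally show ?thesis .
qed

lemma main_bound:
  fixes p J :: real and D0 :: nat
  assumes p: "p > 1" and DD0: "(\<Sum>i=1..S. sum_list (Dl i)) \<le> D0"
  shows "\<bar>F_arr p J h sig - (\<Sum>i=1..S. F_arr p J h (dl i))\<bar>
     \<le> real D0 * (Kp p * (12 * real h + 4 * real D0)) * 2 powr (p - 1) * real (Min (Mb ` {1..S})) powr (1 - p)"
proof -
  define M where "M = (\<Sum>i=1..S. Mb i)"
  define ml where "ml i = Mb (prv i) div 2" for i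
  define mr where "mr i = Mb i div 2" for i
  define m where "m = real (Min (Mb ` {1..S}))"
  define eb where "eb = e_per p J h"
  define B where "B = Kp p * (12 * real h + 4 * real D0) * (m/2) powr (1-p)"
  define si where "si i = (\<lambda>y. ss (y + int (qq i)))" for i
  define Dz where "Dz i = sum_list (Dl i)" for i
  define W where "W i = {1 - int (ml i * h) .. int (Dz i) + int (mr i * h)}" for i
  define X where "X i = {int (Dz i) + int (mr i * h) + 1 .. int (Dz i) + int (Kf i * h) - int (ml i * h)}" for i
  have fin: "finite (Mb ` {1..S})" and ne: "Mb ` {1..S} \<noteq> {}" using S1 by auto
  have ml2: "2 * ml i = Mb (prv i)" if "i \<in> {1..S}" for i
    unfolding ml_def using Mb_even[OF prv_in[OF that]] by simp
  have mr2: "2 * mr i = Mb i" if "i \<in> {1..S}" for i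
    unfolding mr_def using Mb_even[OF that] by simp
  have MbM: "Mb i \<le> M" if "i \<in> {1..S}" for i
    unfolding M_def using that by (intro member_le_sum) auto
  have m2: "2 \<le> m"
  proof -
    have "2 \<le> Min (Mb ` {1..S})" using fin ne Mb_ge2 by (subst Min_ge_iff) auto
    thus ?thesis unfolding m_def by simp
  qed
  have mle: "m \<le> real (Mb i)" if "i \<in> {1..S}" for i
    unfolding m_def using fin that by (simp add: Min_le)
  have eb_eq: "(\<Sum>x\<in>{1..int h}. gx p J (pih h) x) / real h = eb"
    unfolding eb_def by (rule e_per_formula[OF p h, symmetric])
  have DzD0: "Dz i \<le> D0" if "i \<in> {1..S}" for i
  proof -
    have "Dz i \<le> (\<Sum>i=1..S. Dz i)" using that by (intro member_le_sum) auto
    thus ?thesis using DD0 unfolding Dz_def by simp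
  qed
  have loc: "\<bar>(\<Sum>y\<in>W i. gx p J (si i) y - gx p J (dsp i) y) - (\<Sum>y\<in>X i. gx p J (dsp i) y - eb)\<bar> \<le> B"
    if i: "i \<in> {1..S}" for i
  proof -
    have pi: "prv i \<in> {1..S}" by (rule prv_in[OF i])
    have Ki: "even (Kf i)" "M \<le> Kf i" using Kev i unfolding M_def by auto
    have mlh: "int (2 * ml i * h) = int (Mb (prv i) * h)" using ml2[OF i] by simp
    have mrh: "int (2 * mr i * h) = int (Mb i * h)" using mr2[OF i] by simp
    have "Mb (prv i) * h \<le> Kf i * h" "Mb i * h \<le> Kf i * h"
      using MbM[OF pi] MbM[OF i] Ki by (intro mult_le_mono1; linarith)+
    hence KpM: "int (Mb (prv i) * h) \<le> int (Kf i * h)" "int (Mb i * h) \<le> int (Kf i * h)"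
      by (simp_all only: of_nat_le_iff)
    have H2: "si i y = pih h y" if "1 - int (2 * ml i * h) \<le> y" "y \<le> 0" for y
    proof -
      have a: "1 - int (Mb (prv i) * h) \<le> y" using that(1) unfolding mlh .
      have "ss (int (qq i) + y) = pih h y" by (rule sL[OF i a that(2)])
      thus ?thesis unfolding si_def by (simp add: add.commute)
    qed
    have H3: "si i y = pih h (y - int (Dz i))" if "int (Dz i) + 1 \<le> y" "y \<le> int (Dz i) + int (2 * mr i * h)" for y
    proof -
      have "ss (int (qq i + sum_list (Dl i)) + (y - int (Dz i))) = pih h (y - int (Dz i))"
        by (rule sR[OF i]) (use that mrh in auto)
      thus ?thesis unfolding si_def Dz_def by (simp add: ac_simps)
    qed
    have H4: "dsp i y = pih h (y - int (Dz i))" if "int (Dz i) + 1 \<le> y" "y \<le> int (Dz i) + int (Kf i * h)" for y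
    proof -
      have "dsp i (int (sum_list (Dl i)) + (y - int (Dz i))) = pih h (y - int (Dz i))"
        by (rule dR[OF i]) (use that in auto)
      thus ?thesis unfolding Dz_def by simp
    qed
    have H1: "si i y = dsp i y" if "1 - int (2 * ml i * h) \<le> y" "y \<le> int (Dz i) + int (2 * mr i * h)" for y
    proof (cases "y \<le> 0")
      case True
      have "dsp i y = pih h y" by (rule dL[OF i]) (use that True mlh KpM in auto)
      thus ?thesis using H2[OF that(1) True] by simp
    next
      case False
      show ?thesis
      proof (cases "y \<le> int (Dz i)")
        case True
        have "si i y = dd i y" unfolding si_def using sD[OF i, of y] False True unfolding Dz_def by (simp add: ac_simps)
        moreover have "dsp i y = dd i y" by (rule dD) (use False True in \<open>auto simp: Dz_def\<close>)
        ultimately show ?thesis by simp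
      next
        case F2: False
        have "si i y = pih h (y - int (Dz i))" by (rule H3) (use F2 that in auto)
        moreover have "dsp i y = pih h (y - int (Dz i))" by (rule H4) (use F2 that mrh KpM in auto)
        ultimately show ?thesis by simp
      qed
    qed
    have Kml: "ml i + mr i \<le> Kf i"
    proof -
      have "2 * (ml i + mr i) \<le> 2 * M" using ml2[OF i] mr2[OF i] MbM[OF pi] MbM[OF i] by simp
      thus ?thesis using Ki by simp
    qed
    have mm: "m \<le> 2 * real (ml i)" "m \<le> 2 * real (mr i)"
    proof -
      have "real (Mb (prv i)) = 2 * real (ml i)" "real (Mb i) = 2 * real (mr i)"
        using ml2[OF i] mr2[OF i] by (simp_all flip: of_nat_mult)
      thus "m \<le> 2 * real (ml i)" "m \<le> 2 * real (mr i)" using mle[OF pi] mle[OF i] by simp_all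
    qed
    have "\<bar>(\<Sum>y\<in>{1 - int (ml i * h)..int (Dz i) + int (mr i * h)}. gx p J (si i) y - gx p J (dsp i) y)
           - (\<Sum>y\<in>{int (Dz i) + int (mr i * h) + 1..int (Dz i) + int (Kf i * h) - int (ml i * h)}. gx p J (dsp i) y - (\<Sum>x\<in>{1..int h}. gx p J (pih h) x) / real h)\<bar>
         \<le> Kp p * (12 * real h + 4 * real D0) * (m/2) powr (1-p)"
    proof (rule local_bound[OF p h])
      show "\<And>y. \<bar>si i y\<bar> \<le> 1" unfolding si_def ss_def by (rule spin_abs)
      show "\<And>y. \<bar>dsp i y\<bar> \<le> 1" unfolding dsp_def by (rule spin_abs)
    qed (use H1 H2 H3 H4 Kml m2 mm DzD0[OF i] Dz_pos[OF i] in \<open>auto simp: Dz_def\<close>)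
    thus ?thesis unfolding W_def X_def B_def eb_eq .
  qed
  define e where "e i = (if i = 0 then - int (ml 1 * h) else int (qq i) + int (Dz i) + int (mr i * h))" for i
  have blk: "e (i - 1) = int (qq i) - int (ml i * h)" "e i = int (qq i) + (int (Dz i) + int (mr i * h))"
    if i: "i \<in> {1..S}" for i
  proof -
    show "e i = int (qq i) + (int (Dz i) + int (mr i * h))" unfolding e_def using i by simp
    show "e (i - 1) = int (qq i) - int (ml i * h)"
    proof (cases "i = 1")
      case True then show ?thesis unfolding e_def using qq1 by simp
    next
      case False
      then obtain j where j: "i = Suc j" "j \<in> {1..S}" using i by (cases i) auto
      have pj: "prv i = j" unfolding prv_def using j by simp
      have "qq i = qq j + Dz j + Mb j * h" unfolding j(1) Dz_def using qq_Suc[of j] j by simp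
      moreover have "Mb j * h = 2 * (mr j * h)" using mr2[OF j(2)] by simp
      moreover have "ml i = mr j" unfolding ml_def mr_def pj ..
      ultimately show ?thesis unfolding e_def using j by simp
    qed
  qed
  have emono: "\<forall>i<S. e i \<le> e (Suc i)"
  proof (intro allI impI)
    fix i assume "i < S"
    hence si: "Suc i \<in> {1..S}" by simp
    have "0 \<le> int (ml (Suc i) * h)" "0 \<le> int (mr (Suc i) * h)" "0 \<le> int (Dz (Suc i))" by simp_all
    moreover have "e i = e (Suc i - 1)" by simp
    ultimately show "e i \<le> e (Suc i)" using blk[OF si] by linarith
  qed
  have e0: "e 0 + 1 = 1 + - int (ml 1 * h)" unfolding e_def by simp
  have eS: "e S = int NN + - int (ml 1 * h)"
  proof -
    have Sin: "S \<in> {1..S}" using S1 by simp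
    have "NN = qq S + Dz S + Mb S * h" unfolding NN_eq Dz_def using qq_Suc[OF S1] by simp
    moreover have "Mb S * h = 2 * (mr S * h)" using mr2[OF Sin] by simp
    moreover have "ml 1 = mr S" unfolding ml_def mr_def prv_def by simp
    ultimately show ?thesis using blk(2)[OF Sin] by simp
  qed
  have Fs: "F_arr p J h sig = (\<Sum>i=1..S. \<Sum>y\<in>W i. gx p J (si i) y - eb)"
  proof -
    have "F_arr p J h sig = (\<Sum>x\<in>{1 + - int (ml 1 * h)..int NN + - int (ml 1 * h)}. gx p J ss x - eb)"
      unfolding ss_def NN_def eb_def by (rule F_arr_sum[OF p h])
    also have "\<dots> = (\<Sum>x\<in>{e 0 + 1..e S}. gx p J ss x - eb)" unfolding e0 eS ..
    also have "\<dots> = (\<Sum>i=1..S. \<Sum>x\<in>{e (i-1) + 1..e i}. gx p J ss x - eb)"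
      by (rule tile_sum[OF emono])
    also have "\<dots> = (\<Sum>i=1..S. \<Sum>y\<in>W i. gx p J (si i) y - eb)"
    proof (rule sum.cong[OF refl])
      fix i assume i: "i \<in> {1..S}"
      have "(\<Sum>x\<in>{e (i-1) + 1..e i}. gx p J ss x - eb) = (\<Sum>y\<in>W i. gx p J ss (y + int (qq i)) - eb)"
        unfolding blk[OF i] W_def
        by (rule sum.reindex_bij_witness[where j="\<lambda>x. x - int (qq i)" and i="\<lambda>y. y + int (qq i)"]) auto
      also have "\<dots> = (\<Sum>y\<in>W i. gx p J (si i) y - eb)"
        unfolding si_def gx_shift ..
      finally show "(\<Sum>x\<in>{e (i-1) + 1..e i}. gx p J ss x - eb) = (\<Sum>y\<in>W i. gx p J (si i) y - eb)" .
    qed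
    finally show ?thesis .
  qed
  have Fd: "F_arr p J h (dl i) = (\<Sum>y\<in>W i. gx p J (dsp i) y - eb) + (\<Sum>y\<in>X i. gx p J (dsp i) y - eb)"
    if i: "i \<in> {1..S}" for i
  proof -
    have sl: "int (sum_list (dl i)) = int (Dz i) + int (Kf i * h)"
      unfolding dl_def Dz_def by (simp add: sum_list_replicate)
    have Kml: "ml i + mr i \<le> Kf i"
    proof -
      have pi: "prv i \<in> {1..S}" by (rule prv_in[OF i])
      have "2 * (ml i + mr i) \<le> 2 * M" using ml2[OF i] mr2[OF i] MbM[OF pi] MbM[OF i] by simp
      hence "ml i + mr i \<le> M" by simp
      moreover have "M \<le> Kf i" using Kev i unfolding M_def by blast
      ultimately show ?thesis by (rule order_trans)
    qed
    hence "ml i * h + mr i * h \<le> Kf i * h" by (metis add_mult_distrib mult_le_mono1)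
    hence kk: "int (ml i * h) + int (mr i * h) \<le> int (Kf i * h)" by (metis of_nat_add of_nat_le_iff)
    have "F_arr p J h (dl i) = (\<Sum>x\<in>{1 + - int (ml i * h)..int (sum_list (dl i)) + - int (ml i * h)}. gx p J (dsp i) x - eb)"
      unfolding dsp_def eb_def by (rule F_arr_sum[OF p h])
    also have "\<dots> = (\<Sum>y\<in>W i. gx p J (dsp i) y - eb) + (\<Sum>y\<in>X i. gx p J (dsp i) y - eb)"
    proof -
      have e1: "1 + - int (ml i * h) = 1 - int (ml i * h)"
        and e2: "int (Dz i) + int (Kf i * h) + - int (ml i * h) = int (Dz i) + int (Kf i * h) - int (ml i * h)" by simp_all
      have n0: "0 \<le> int (ml i * h)" "0 \<le> int (mr i * h)" "0 \<le> int (Dz i)" by simp_all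
      show ?thesis unfolding W_def X_def sl e1 e2
        by (rule sum_split_int) (use kk n0 in linarith)+
    qed
    finally show ?thesis .
  qed
  have "F_arr p J h sig - (\<Sum>i=1..S. F_arr p J h (dl i))
      = (\<Sum>i=1..S. (\<Sum>y\<in>W i. gx p J (si i) y - gx p J (dsp i) y) - (\<Sum>y\<in>X i. gx p J (dsp i) y - eb))"
  proof -
    have "F_arr p J h sig - (\<Sum>i=1..S. F_arr p J h (dl i))
        = (\<Sum>i=1..S. (\<Sum>y\<in>W i. gx p J (si i) y - eb) - F_arr p J h (dl i))"
      unfolding Fs by (simp add: sum_subtractf)
    also have "\<dots> = (\<Sum>i=1..S. (\<Sum>y\<in>W i. gx p J (si i) y - gx p J (dsp i) y) - (\<Sum>y\<in>X i. gx p J (dsp i) y - eb))"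
    proof (rule sum.cong[OF refl])
      fix i assume i: "i \<in> {1..S}"
      show "(\<Sum>y\<in>W i. gx p J (si i) y - eb) - F_arr p J h (dl i)
          = (\<Sum>y\<in>W i. gx p J (si i) y - gx p J (dsp i) y) - (\<Sum>y\<in>X i. gx p J (dsp i) y - eb)"
        unfolding Fd[OF i] by (simp add: sum_subtractf)
    qed
    finally show ?thesis .
  qed
  hence "\<bar>F_arr p J h sig - (\<Sum>i=1..S. F_arr p J h (dl i))\<bar> \<le> (\<Sum>i=1..S. B)"
    using loc by (simp only:) (rule order.trans[OF sum_abs sum_mono], simp)
  also have "\<dots> = real S * B" by simp
  also have "\<dots> \<le> real D0 * B"
  proof -
    have "S \<le> (\<Sum>i=1..S. Dz i)"
    proof -
      have "(\<Sum>i=1..S. (1::nat)) \<le> (\<Sum>i=1..S. Dz i)" using Dz_pos unfolding Dz_def by (intro sum_mono) auto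
      thus ?thesis by simp
    qed
    hence "real S \<le> real D0" using DD0 unfolding Dz_def by simp
    moreover have "B \<ge> 0" unfolding B_def Kp_def using p by simp
    ultimately show ?thesis by (rule mult_right_mono)
  qed
  also have "\<dots> = real D0 * (Kp p * (12 * real h + 4 * real D0)) * 2 powr (p - 1) * real (Min (Mb ` {1..S})) powr (1 - p)"
  proof -
    have m0: "m > 0" using m2 by simp
    have "(m/2) powr (1-p) = m powr (1-p) / 2 powr (1-p)" using m0 by (simp add: powr_divide)
    also have "\<dots> = m powr (1-p) * 2 powr (p-1)"
    proof -
      have inv: "inverse (2 powr (1-p)) = (2::real) powr (p-1)" using powr_minus[of "2::real" "1-p"] by simp
      show ?thesis by (simp add: divide_inverse inv)
    qed
    finally show ?thesis unfolding B_def m_def by (simp add: mult_ac)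
  qed
  finally show ?thesis .
qed

end

end


theorem mainTheorem3:
  fixes p J :: real and hstar D0 :: nat
  assumes "standing p J hstar"
  shows "\<exists>C::real. \<forall>(S::nat) (Dl :: nat \<Rightarrow> nat list) (Mb :: nat \<Rightarrow> nat).
    S \<ge> 1
    \<longrightarrow> (\<forall>i\<in>{1..S}. Dl i \<noteq> [] \<and> (\<forall>x\<in>set (Dl i). x > 0))
    \<longrightarrow> (\<forall>i\<in>{1..S}. Mb i > 0 \<and> even (Mb i))
    \<longrightarrow> (\<Sum>i=1..S. sum_list (Dl i)) \<le> D0
    \<longrightarrow> (\<forall>i\<in>{1..S}. \<forall>j\<in>{1..S}.
          even ((\<Sum>k=1..<i. length (Dl k) + Mb k) + length (Dl i))
          = even ((\<Sum>k=1..<j. length (Dl k) + Mb k) + length (Dl j)))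
    \<longrightarrow> even (\<Sum>i=1..S. length (Dl i) + Mb i)
    \<longrightarrow> (let M = (\<Sum>i=1..S. Mb i);
             Dsz = (\<lambda>i. sum_list (Dl i));
             \<sigma> = concat (map (\<lambda>i. Dl i @ replicate (Mb i) hstar) [1..<S+1]);
             Ni = (\<lambda>i. M * hstar + 2 * hstar * (\<Sum>j=i+1..S. Dsz j div (2 * hstar))
                      + Dsz i + 2 * hstar * ((\<Sum>j=1..<i. Dsz j) div (2 * hstar)));
             \<delta> = (\<lambda>i. Dl i @ replicate ((Ni i - Dsz i) div hstar) hstar)
         in \<bar>F_arr p J hstar \<sigma> - (\<Sum>i=1..S. F_arr p J hstar (\<delta> i))\<bar>
              \<le> C * real (Min (Mb ` {1..S})) powr (1 - p))"
proof -
  have p: "p > 1" and h: "hstar > 0" using assms unfolding standing_def by auto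
  show ?thesis
  proof (rule exI[of _ "real D0 * (Kp p * (12 * real hstar + 4 * real D0)) * 2 powr (p - 1)"], intro allI impI)
    fix S :: nat and Dl :: "nat \<Rightarrow> nat list" and Mb :: "nat \<Rightarrow> nat"
    assume S1: "S \<ge> 1"
      and Dpos: "\<forall>i\<in>{1..S}. Dl i \<noteq> [] \<and> (\<forall>x\<in>set (Dl i). x > 0)"
      and Mev: "\<forall>i\<in>{1..S}. Mb i > 0 \<and> even (Mb i)"
      and DD0: "(\<Sum>i=1..S. sum_list (Dl i)) \<le> D0"
      and par: "\<forall>i\<in>{1..S}. \<forall>j\<in>{1..S}.
          even ((\<Sum>k=1..<i. length (Dl k) + Mb k) + length (Dl i))
          = even ((\<Sum>k=1..<j. length (Dl k) + Mb k) + length (Dl j))"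
      and tot: "even (\<Sum>i=1..S. length (Dl i) + Mb i)"
    define M where "M = (\<Sum>i=1..S. Mb i)"
    define Dsz where "Dsz = (\<lambda>i. sum_list (Dl i))"
    define Ni where "Ni = (\<lambda>i. M * hstar + 2 * hstar * (\<Sum>j=i+1..S. Dsz j div (2 * hstar))
                      + Dsz i + 2 * hstar * ((\<Sum>j=1..<i. Dsz j) div (2 * hstar)))"
    define Kf where "Kf i = (Ni i - Dsz i) div hstar" for i
    have Kf_eq: "Kf i = M + 2 * (\<Sum>j=i+1..S. Dsz j div (2 * hstar)) + 2 * ((\<Sum>j=1..<i. Dsz j) div (2 * hstar))" for i
    proof -
      have "Ni i - Dsz i = hstar * (M + 2 * (\<Sum>j=i+1..S. Dsz j div (2 * hstar)) + 2 * ((\<Sum>j=1..<i. Dsz j) div (2 * hstar)))"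
        unfolding Ni_def by (simp add: algebra_simps)
      thus ?thesis unfolding Kf_def using h by simp
    qed
    have Mev2: "even M" unfolding M_def using Mev by (intro dvd_sum) auto
    have Kev: "\<forall>i\<in>{1..S}. even (Kf i) \<and> sum Mb {1..S} \<le> Kf i"
      using Mev2 unfolding Kf_eq M_def[symmetric] by auto
    have main: "\<bar>F_arr p J hstar (sig hstar S Dl Mb) - (\<Sum>i=1..S. F_arr p J hstar (dl hstar Dl Kf i))\<bar>
       \<le> real D0 * (Kp p * (12 * real hstar + 4 * real D0)) * 2 powr (p - 1) * real (Min (Mb ` {1..S})) powr (1 - p)"
      by (rule main_bound[OF h S1 Dpos Mev par tot Kev p DD0])
    have sg: "sig hstar S Dl Mb = concat (map (\<lambda>i. Dl i @ replicate (Mb i) hstar) [1..<S+1])"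
    proof -
      have ffe: "ff hstar Dl Mb = (\<lambda>i. Dl i @ replicate (Mb i) hstar)"
        by (rule ext) (rule ff_def[OF h S1 Dpos Mev par tot])
      show ?thesis unfolding sig_def[OF h S1 Dpos Mev par tot] ffe ..
    qed
    have dg: "dl hstar Dl Kf i = Dl i @ replicate ((Ni i - Dsz i) div hstar) hstar" for i
      using dl_def[OF h S1 Dpos Mev par tot Kev] unfolding Kf_def by simp
    show "let M = (\<Sum>i=1..S. Mb i);
             Dsz = (\<lambda>i. sum_list (Dl i));
             \<sigma> = concat (map (\<lambda>i. Dl i @ replicate (Mb i) hstar) [1..<S+1]);
             Ni = (\<lambda>i. M * hstar + 2 * hstar * (\<Sum>j=i+1..S. Dsz j div (2 * hstar))
                      + Dsz i + 2 * hstar * ((\<Sum>j=1..<i. Dsz j) div (2 * hstar)));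
             \<delta> = (\<lambda>i. Dl i @ replicate ((Ni i - Dsz i) div hstar) hstar)
         in \<bar>F_arr p J hstar \<sigma> - (\<Sum>i=1..S. F_arr p J hstar (\<delta> i))\<bar>
              \<le> real D0 * (Kp p * (12 * real hstar + 4 * real D0)) * 2 powr (p - 1) * real (Min (Mb ` {1..S})) powr (1 - p)"
      unfolding Let_def M_def[symmetric] Dsz_def[symmetric]
      using main unfolding sg dg Ni_def .
  qed
qed


end
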